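(* Let $g\colon\mathbb{S}^1\to\mathbb{S}^1$ be an orientation-preserving homeomorphism. For $i=1,2$, the map $\widetilde\iota_i=Q\circ\iota_i\colon\overline Z_i\to\widetilde Z$ is $1$-Lipschitz (with respect to $\sigma$ and $d_{\widetilde Z}$) and is a local isometry on $Z_i$. Moreover, for every $z\in\widetilde Z$ the preimage $\widetilde\iota_i^{-1}(z)$ is compact and connected, and it contains two or more points only if $\widetilde\iota_i^{-1}(z)\subset\mathbb{S}^1$.
   Context: Let $\mathbb{S}^2\subset\mathbb{R}^3$ be the unit sphere with great-circle distance $\sigma$, $\mathbb{S}^1$ the equator, $Z_1,Z_2$ the open southern and northern hemispheres. For an orientation-preserving homeomorphism $g\colon\mathbb{S}^1\to\mathbb{S}^1$, $Z$ is obtained from $\overline Z_1\sqcup\overline Z_2$ by identifying $z\in\mathbb{S}^1\subset\overline Z_1$ with $g(z)\in\mathbb{S}^1\subset\overline Z_2$, with maps $\iota_i\colon\overline Z_i\to Z$. Define $D(x,y)=\infty$ if one point is in $\iota_1(Z_1)$ and the other in $\iota_2(Z_2)$; $D(\iota_1(a),\iota_1(b))=\min\{\sigma(a,b),\sigma(g(a),g(b))\}$ for $a,b\in\mathbb{S}^1$; otherwise $D(x,y)=\sigma(\iota_i^{-1}(x),\iota_i^{-1}(y))$ for the common $i$. $d_Z=\inf\sum_k D(x_k,x_{k+1})$ over finite chains; $\widetilde Z$ is the metric space obtained by identifying points at $d_Z$-distance 0, $Q\colon Z\to\widetilde Z$ the quotient map, $d_{\widetilde Z}$ the induced distance. *)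

theory Defs
  imports "HOL-Analysis.Analysis"
begin

definition S2 :: "(real^3) set" where
  "S2 = {x. norm x = 1}"

definition S1 :: "(real^3) set" where
  "S1 = {x \<in> S2. x$3 = 0}"

definition Zo :: "nat \<Rightarrow> (real^3) set" where
  "Zo i = (if i = 1 then {x \<in> S2. x$3 < 0} else {x \<in> S2. x$3 > 0})"

definition Zc :: "nat \<Rightarrow> (real^3) set" where
  "Zc i = (if i = 1 then {x \<in> S2. x$3 \<le> 0} else {x \<in> S2. x$3 \<ge> 0})"

definition sigma :: "real^3 \<Rightarrow> real^3 \<Rightarrow> real" where
  "sigma a b = arccos (inner a b)"

definition eqpt :: "real \<Rightarrow> real^3" where
  "eqpt t = vector [cos t, sin t, 0]"

text \<open>A homeomorphism of the circle is orientation preserving iff it has a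
  strictly increasing lift.\<close>
definition orient_pres_homeo :: "(real^3 \<Rightarrow> real^3) \<Rightarrow> bool" where
  "orient_pres_homeo g \<longleftrightarrow>
     (\<exists>h. homeomorphism S1 S1 g h) \<and>
     (\<exists>F. continuous_on UNIV F \<and> strict_mono F \<and>
          (\<forall>t. F (t + 2*pi) = F t + 2*pi) \<and>
          (\<forall>t. g (eqpt t) = eqpt (F t)))"

definition DU :: "(nat \<times> (real^3)) set" where
  "DU = {(i, x). i \<in> {1, 2} \<and> x \<in> Zc i}"

definition glue :: "(real^3 \<Rightarrow> real^3) \<Rightarrow> ((nat \<times> (real^3)) \<times> (nat \<times> (real^3))) set" where
  "glue g = {((1, z), (2, g z)) | z. z \<in> S1}"

definition zrel :: "(real^3 \<Rightarrow> real^3) \<Rightarrow> ((nat \<times> (real^3)) \<times> (nat \<times> (real^3))) set" where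
  "zrel g = (glue g \<union> (glue g)\<inverse>)\<^sup>* \<inter> (DU \<times> DU)"

definition Z :: "(real^3 \<Rightarrow> real^3) \<Rightarrow> (nat \<times> (real^3)) set set" where
  "Z g = DU // zrel g"

definition iota :: "(real^3 \<Rightarrow> real^3) \<Rightarrow> nat \<Rightarrow> real^3 \<Rightarrow> (nat \<times> (real^3)) set" where
  "iota g i a = zrel g `` {(i, a)}"

definition iota_inv :: "(real^3 \<Rightarrow> real^3) \<Rightarrow> nat \<Rightarrow> (nat \<times> (real^3)) set \<Rightarrow> real^3" where
  "iota_inv g i x = (THE a. a \<in> Zc i \<and> iota g i a = x)"

definition D :: "(real^3 \<Rightarrow> real^3) \<Rightarrow> (nat \<times> (real^3)) set \<Rightarrow> (nat \<times> (real^3)) set \<Rightarrow> ereal" where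
  "D g x y =
    (if (x \<in> iota g 1 ` Zo 1 \<and> y \<in> iota g 2 ` Zo 2) \<or>
        (x \<in> iota g 2 ` Zo 2 \<and> y \<in> iota g 1 ` Zo 1) then \<infinity>
     else if x \<in> iota g 1 ` S1 \<and> y \<in> iota g 1 ` S1 then
       (let a = iota_inv g 1 x; b = iota_inv g 1 y in
         ereal (min (sigma a b) (sigma (g a) (g b))))
     else if x \<in> iota g 1 ` Zc 1 \<and> y \<in> iota g 1 ` Zc 1 then
       ereal (sigma (iota_inv g 1 x) (iota_inv g 1 y))
     else ereal (sigma (iota_inv g 2 x) (iota_inv g 2 y)))"

definition dZ :: "(real^3 \<Rightarrow> real^3) \<Rightarrow> (nat \<times> (real^3)) set \<Rightarrow> (nat \<times> (real^3)) set \<Rightarrow> ereal" where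
  "dZ g x y = Inf {sum_list (map2 (D g) xs (tl xs)) | xs.
                   xs \<noteq> [] \<and> set xs \<subseteq> Z g \<and> hd xs = x \<and> last xs = y}"

definition zero_rel :: "(real^3 \<Rightarrow> real^3) \<Rightarrow> ((nat \<times> (real^3)) set \<times> (nat \<times> (real^3)) set) set" where
  "zero_rel g = {(x, y). x \<in> Z g \<and> y \<in> Z g \<and> dZ g x y = 0}"

definition Zt :: "(real^3 \<Rightarrow> real^3) \<Rightarrow> (nat \<times> (real^3)) set set set" where
  "Zt g = Z g // zero_rel g"

definition Q :: "(real^3 \<Rightarrow> real^3) \<Rightarrow> (nat \<times> (real^3)) set \<Rightarrow> (nat \<times> (real^3)) set set" where
  "Q g x = zero_rel g `` {x}"

definition dZt :: "(real^3 \<Rightarrow> real^3) \<Rightarrow> (nat \<times> (real^3)) set set \<Rightarrow> (nat \<times> (real^3)) set set \<Rightarrow> ereal" where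
  "dZt g p q = dZ g (SOME x. x \<in> p) (SOME y. y \<in> q)"

definition iota_t :: "(real^3 \<Rightarrow> real^3) \<Rightarrow> nat \<Rightarrow> real^3 \<Rightarrow> (nat \<times> (real^3)) set set" where
  "iota_t g i a = Q g (iota g i a)"

end

theory Submission
  imports Defs
begin

declare One_nat_def [simp del]

lemma S2_norm: "x \<in> S2 \<longleftrightarrow> norm x = 1" by (simp add: S2_def)

lemma inner_abs_le1: "norm x = 1 \<Longrightarrow> norm y = 1 \<Longrightarrow> \<bar>inner x y\<bar> \<le> (1::real)"
  using Cauchy_Schwarz_ineq2[of x y] by simp

lemma sigma_sym: "sigma a b = sigma b a"
  by (simp add: sigma_def inner_commute)

lemma sigma_ge0: "norm x = 1 \<Longrightarrow> norm y = 1 \<Longrightarrow> 0 \<le> sigma x y"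
  unfolding sigma_def using inner_abs_le1[of x y] by (intro arccos_lbound) auto

lemma sigma_le_pi: "norm x = 1 \<Longrightarrow> norm y = 1 \<Longrightarrow> sigma x y \<le> pi"
  unfolding sigma_def using inner_abs_le1[of x y] by (intro arccos_ubound) auto

lemma sigma_cos: "norm x = 1 \<Longrightarrow> norm y = 1 \<Longrightarrow> cos (sigma x y) = inner x y"
  unfolding sigma_def using inner_abs_le1[of x y] by (intro cos_arccos) auto

lemma sigma_refl: "norm x = 1 \<Longrightarrow> sigma x x = 0"
  by (simp add: sigma_def inner_commute norm_eq_sqrt_inner power2_eq_1_iff)

lemma sigma_eq0: "norm x = 1 \<Longrightarrow> norm y = 1 \<Longrightarrow> sigma x y = 0 \<Longrightarrow> x = y"
proof -
  assume a: "norm x = 1" "norm y = 1" "sigma x y = 0"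
  then have "inner x y = 1" using sigma_cos[of x y] by simp
  have xx: "inner x x = 1" "inner y y = 1" using a by (simp_all add: power2_norm_eq_inner[symmetric])
  have "norm (x - y) ^ 2 = 0"
    unfolding power2_norm_eq_inner using xx \<open>inner x y = 1\<close> by (simp add: inner_diff inner_commute)
  then show "x = y" by simp
qed

lemma sigma_tri:
  fixes x y z :: "real^3"
  assumes n: "norm x = 1" "norm y = 1" "norm z = 1"
  shows "sigma x z \<le> sigma x y + sigma y z"
proof (cases "sigma x y + sigma y z \<le> pi")
  case False
  then show ?thesis using sigma_le_pi[OF n(1) n(3)] by simp
next
  case True
  define \<alpha> where "\<alpha> = sigma x y"
  define \<beta> where "\<beta> = sigma y z"
  have a0: "0 \<le> \<alpha>" "\<alpha> \<le> pi" "0 \<le> \<beta>" "\<beta> \<le> pi"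
    using sigma_ge0 sigma_le_pi n unfolding \<alpha>_def \<beta>_def by auto
  have ca: "cos \<alpha> = inner x y" and cb: "cos \<beta> = inner y z"
    using sigma_cos n unfolding \<alpha>_def \<beta>_def by auto
  have sa: "sin \<alpha> \<ge> 0" "sin \<beta> \<ge> 0" using a0 by (auto intro: sin_ge_zero)
  define u where "u = x - inner x y *\<^sub>R y"
  define w where "w = z - inner y z *\<^sub>R y"
  have yy: "inner y y = 1" using n by (simp add: power2_norm_eq_inner[symmetric])
  have xx: "inner x x = 1" using n by (simp add: power2_norm_eq_inner[symmetric])
  have zz: "inner z z = 1" using n by (simp add: power2_norm_eq_inner[symmetric])
  have xz: "inner x z = inner x y * inner y z + inner u w"
    unfolding u_def w_def by (simp add: inner_diff inner_commute yy algebra_simps)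
  have uu: "norm u ^ 2 = (sin \<alpha>) ^ 2"
    unfolding u_def power2_norm_eq_inner using sin_squared_eq[of \<alpha>] ca
    by (simp add: inner_diff inner_commute yy xx algebra_simps power2_eq_square)
  have ww: "norm w ^ 2 = (sin \<beta>) ^ 2"
    unfolding w_def power2_norm_eq_inner using sin_squared_eq[of \<beta>] cb
    by (simp add: inner_diff inner_commute yy zz algebra_simps power2_eq_square)
  have nu: "norm u = sin \<alpha>" using uu sa by (simp add: power2_eq_iff_nonneg)
  have nw: "norm w = sin \<beta>" using ww sa by (simp add: power2_eq_iff_nonneg)
  have "inner u w \<ge> - (norm u * norm w)"
    using Cauchy_Schwarz_ineq2[of u w] by linarith
  then have "inner x z \<ge> cos (\<alpha> + \<beta>)"
    using xz ca cb nu nw by (simp add: cos_add)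
  then have "arccos (inner x z) \<le> arccos (cos (\<alpha> + \<beta>))"
    using inner_abs_le1[OF n(1) n(3)] by (intro arccos_le_arccos) (auto simp: cos_ge_minus_one)
  also have "\<dots> = \<alpha> + \<beta>" using True a0 unfolding \<alpha>_def \<beta>_def by (intro arccos_cos) auto
  finally show ?thesis unfolding \<alpha>_def \<beta>_def sigma_def .
qed




lemma S1_Zc: "S1 \<subseteq> Zc i" by (auto simp: S1_def Zc_def)
lemma Zo_Zc: "Zo i \<subseteq> Zc i" by (auto simp: Zo_def Zc_def)
lemma Zc_split: "i \<in> {1,2} \<Longrightarrow> Zc i = Zo i \<union> S1" by (auto simp: S1_def Zc_def Zo_def)
lemma Zo_S1: "Zo i \<inter> S1 = {}" by (auto simp: S1_def Zo_def)
lemma Zc_norm: "a \<in> Zc i \<Longrightarrow> norm a = 1" by (auto simp: Zc_def S2_def split: if_splits)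

context
  fixes g :: "real^3 \<Rightarrow> real^3"
  assumes gS: "g ` S1 = S1" and gi: "inj_on g S1"
begin

definition RR where "RR = glue g \<union> (glue g)\<inverse>"

lemma RR_trans: "((p,q) \<in> Id \<union> RR) \<Longrightarrow> ((q,r) \<in> RR) \<Longrightarrow> (p,r) \<in> Id \<union> RR"
  using gi by (auto simp: RR_def glue_def dest: inj_onD)

lemma rtr: "(p,q) \<in> RR\<^sup>* \<Longrightarrow> (p,q) \<in> Id \<union> RR"
  by (induction rule: rtrancl_induct) (simp, metis RR_trans)

lemma zrel_eq: "zrel g = (Id \<union> RR) \<inter> (DU \<times> DU)"
  unfolding zrel_def RR_def[symmetric] using rtr by auto

lemma gS1: "z \<in> S1 \<Longrightarrow> g z \<in> S1" using gS by auto

lemma iota1: "a \<in> Zc 1 \<Longrightarrow> iota g 1 a = {(1,a)} \<union> (if a \<in> S1 then {(2, g a)} else {})"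
  using gS1[of a] S1_Zc[of 2]
  by (auto simp: iota_def zrel_eq RR_def glue_def DU_def)

lemma iota2: "b \<in> Zc 2 \<Longrightarrow> iota g 2 b = {(2,b)} \<union> {(1,z) | z. z \<in> S1 \<and> g z = b}"
  using S1_Zc[of 1]
  by (auto simp: iota_def zrel_eq RR_def glue_def DU_def)

lemma iota21: "a \<in> S1 \<Longrightarrow> iota g 2 (g a) = iota g 1 a"
proof -
  assume a: "a \<in> S1"
  have "{(1::nat,z)|z. z\<in>S1 \<and> g z = g a} = {(1,a)}" using gi a by (auto dest: inj_onD)
  moreover have "iota g 2 (g a) = {(2,g a)} \<union> {(1::nat,z)|z. z\<in>S1 \<and> g z = g a}"
    using a S1_Zc[of 2] gS1[of a] by (intro iota2) auto
  moreover have "iota g 1 a = {(1,a)} \<union> {(2, g a)}" using a S1_Zc[of 1] iota1[of a] by auto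
  ultimately show ?thesis by auto
qed

lemma mem_iota1: "a \<in> Zc 1 \<Longrightarrow> (1,b) \<in> iota g 1 a \<Longrightarrow> b = a"
  by (auto simp: iota1 split: if_splits)
lemma mem_iota2: "a \<in> Zc 2 \<Longrightarrow> (2,b) \<in> iota g 2 a \<Longrightarrow> b = a"
  by (auto simp: iota2 split: if_splits)
lemma self_iota1: "a \<in> Zc 1 \<Longrightarrow> (1,a) \<in> iota g 1 a"
  by (auto simp: iota1)
lemma self_iota2: "a \<in> Zc 2 \<Longrightarrow> (2,a) \<in> iota g 2 a"
  by (auto simp: iota2)

lemma iota1_inj: "a \<in> Zc 1 \<Longrightarrow> b \<in> Zc 1 \<Longrightarrow> iota g 1 a = iota g 1 b \<Longrightarrow> a = b"
  by (metis mem_iota1 self_iota1)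

lemma iota2_inj: "a \<in> Zc 2 \<Longrightarrow> b \<in> Zc 2 \<Longrightarrow> iota g 2 a = iota g 2 b \<Longrightarrow> a = b"
  by (metis mem_iota2 self_iota2)

lemma iota12: "a \<in> Zc 1 \<Longrightarrow> b \<in> Zc 2 \<Longrightarrow> iota g 1 a = iota g 2 b \<Longrightarrow> a \<in> S1 \<and> b = g a"
proof -
  assume a: "a \<in> Zc 1" "b \<in> Zc 2" "iota g 1 a = iota g 2 b"
  then have "(1,a) \<in> iota g 2 b" using self_iota1 by metis
  then show ?thesis using a(2) by (auto simp: iota2)
qed

lemma iota_inj: "i \<in> {1,2} \<Longrightarrow> a \<in> Zc i \<Longrightarrow> b \<in> Zc i \<Longrightarrow> iota g i a = iota g i b \<Longrightarrow> a = b"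
  using iota1_inj iota2_inj by auto

lemma iota_inv1: "a \<in> Zc 1 \<Longrightarrow> iota_inv g 1 (iota g 1 a) = a"
  unfolding iota_inv_def by (rule the_equality) (auto dest: iota1_inj)

lemma iota_inv2: "a \<in> Zc 2 \<Longrightarrow> iota_inv g 2 (iota g 2 a) = a"
  unfolding iota_inv_def by (rule the_equality) (auto dest: iota2_inj)

lemma Z_eq: "Z g = iota g 1 ` Zc 1 \<union> iota g 2 ` Zc 2"
  unfolding Z_def quotient_def DU_def iota_def by auto

lemma iota2_S1: "iota g 2 ` S1 = iota g 1 ` S1"
proof -
  have "iota g 2 ` S1 = iota g 2 ` (g ` S1)" using gS by simp
  also have "\<dots> = iota g 1 ` S1" using iota21 by (auto simp: image_iff)
  finally show ?thesis .
qed

lemma Z_eq2: "Z g = iota g 1 ` Zc 1 \<union> iota g 2 ` Zo 2"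
proof -
  have "iota g 2 ` Zc 2 = iota g 2 ` Zo 2 \<union> iota g 2 ` S1" using Zc_split[of 2] by (simp add: image_Un)
  then have "iota g 2 ` Zc 2 = iota g 2 ` Zo 2 \<union> iota g 1 ` S1" using iota2_S1 by simp
  then show ?thesis unfolding Z_eq using S1_Zc[of 1] by auto
qed

lemma disj1: "iota g 1 ` Zo 1 \<inter> iota g 2 ` Zc 2 = {}"
  using Zo_S1[of 1] Zo_Zc[of 1] by (auto dest!: iota12)

lemma disj2: "iota g 2 ` Zo 2 \<inter> iota g 1 ` Zc 1 = {}"
proof (rule ccontr)
  assume "\<not> ?thesis"
  then obtain a b where "a \<in> Zo 2" "b \<in> Zc 1" "iota g 2 a = iota g 1 b" by auto
  moreover then have "a \<in> Zc 2" using Zo_Zc[of 2] by auto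
  ultimately show False using Zo_S1[of 2] iota12[of b a] gS1[of b] by auto
qed

lemma Z_eq3: "Z g = iota g 1 ` Zo 1 \<union> iota g 1 ` S1 \<union> iota g 2 ` Zo 2"
  unfolding Z_eq2 using Zc_split[of 1] by auto

lemma iota_Z: "i \<in> {1,2} \<Longrightarrow> a \<in> Zc i \<Longrightarrow> iota g i a \<in> Z g"
  unfolding Z_eq by auto

end



definition CS :: "(real^3 \<Rightarrow> real^3) \<Rightarrow> (nat \<times> (real^3)) set list \<Rightarrow> ereal" where
  "CS g xs = sum_list (map2 (D g) xs (tl xs))"

lemma CS_single[simp]: "CS g [x] = 0" by (simp add: CS_def)
lemma CS_cons2[simp]: "CS g (x # y # r) = D g x y + CS g (y # r)" by (simp add: CS_def)

lemma CS_append: "xs \<noteq> [] \<Longrightarrow> ys \<noteq> [] \<Longrightarrow> last xs = hd ys \<Longrightarrow> CS g (xs @ tl ys) = CS g xs + CS g ys"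
proof (induction xs)
  case Nil then show ?case by simp
next
  case (Cons x xs)
  show ?case
  proof (cases "xs = []")
    case True
    then show ?thesis using Cons by (cases ys) auto
  next
    case False
    then obtain y r where xs: "xs = y # r" by (cases xs) auto
    have "CS g ((x # xs) @ tl ys) = D g x y + CS g (xs @ tl ys)" using xs by simp
    also have "\<dots> = D g x y + (CS g xs + CS g ys)" using Cons False by simp
    finally show ?thesis using xs by (simp add: add.assoc)
  qed
qed

lemma D_sym: "D g x y = D g y x"
  unfolding D_def Let_def by (auto simp: sigma_sym min.commute)

lemma CS_snoc: "xs \<noteq> [] \<Longrightarrow> CS g (xs @ [y]) = CS g xs + D g (last xs) y"
  using CS_append[of xs "[last xs, y]" g] by simp

lemma CS_rev: "CS g (rev xs) = CS g xs"
proof (induction xs)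
  case Nil then show ?case by simp
next
  case (Cons x xs)
  show ?case
  proof (cases "xs = []")
    case True then show ?thesis by simp
  next
    case False
    then obtain y r where xs: "xs = y # r" by (cases xs) auto
    have "CS g (rev (x # xs)) = CS g (rev xs) + D g (last (rev xs)) x"
      using False by (simp add: CS_snoc)
    also have "\<dots> = CS g xs + D g y x" using Cons xs by (simp add: last_rev)
    finally show ?thesis using xs by (simp add: D_sym add.commute)
  qed
qed

lemma dZ_le: "xs \<noteq> [] \<Longrightarrow> set xs \<subseteq> Z g \<Longrightarrow> dZ g (hd xs) (last xs) \<le> CS g xs"
  unfolding dZ_def CS_def by (rule Inf_lower) auto

lemma dZ_ge: "(\<And>xs. xs \<noteq> [] \<Longrightarrow> set xs \<subseteq> Z g \<Longrightarrow> hd xs = x \<Longrightarrow> last xs = y \<Longrightarrow> c \<le> CS g xs) \<Longrightarrow> c \<le> dZ g x y"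
  unfolding dZ_def CS_def by (rule Inf_greatest) auto

lemma dZ_sym: "dZ g x y = dZ g y x"
proof -
  have *: "dZ g x y \<le> dZ g y x" for x y
  proof (rule dZ_ge)
    fix xs assume "xs \<noteq> []" "set xs \<subseteq> Z g" "hd xs = y" "last xs = x"
    then show "dZ g x y \<le> CS g xs"
      using dZ_le[of "rev xs" g] by (simp add: CS_rev hd_rev last_rev)
  qed
  show ?thesis using *[of x y] *[of y x] by simp
qed

context
  fixes g :: "real^3 \<Rightarrow> real^3"
  assumes gS: "g ` S1 = S1" and gi: "inj_on g S1"
begin

definition pot :: "(real^3 \<Rightarrow> real) \<Rightarrow> (real^3 \<Rightarrow> real) \<Rightarrow> (nat \<times> (real^3)) set \<Rightarrow> real" where
  "pot P1 P2 x = (if x \<in> iota g 1 ` Zc 1 then P1 (iota_inv g 1 x) else P2 (iota_inv g 2 x))"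

lemma pot1: "a \<in> Zc 1 \<Longrightarrow> pot P1 P2 (iota g 1 a) = P1 a"
  by (simp add: pot_def iota_inv1[OF gS gi])

lemma pot2: assumes comp: "\<And>c. c \<in> S1 \<Longrightarrow> P2 (g c) = P1 c" and b: "b \<in> Zc 2"
  shows "pot P1 P2 (iota g 2 b) = P2 b"
proof (cases "iota g 2 b \<in> iota g 1 ` Zc 1")
  case True
  then obtain a where a: "a \<in> Zc 1" "iota g 1 a = iota g 2 b" by auto
  then have "a \<in> S1" "b = g a" using iota12[OF gS gi a(1) b] by auto
  have "pot P1 P2 (iota g 2 b) = P1 a" using pot1[OF a(1), of P1 P2] a(2) by simp
  also have "\<dots> = P2 b" using comp \<open>a \<in> S1\<close> \<open>b = g a\<close> by simp
  finally show ?thesis .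
next
  case False
  then show ?thesis using b by (simp add: pot_def iota_inv2[OF gS gi])
qed

lemma pot_D:
  assumes L1: "\<And>x y. x \<in> Zc 1 \<Longrightarrow> y \<in> Zc 1 \<Longrightarrow> \<bar>P1 x - P1 y\<bar> \<le> sigma x y"
    and L2: "\<And>x y. x \<in> Zc 2 \<Longrightarrow> y \<in> Zc 2 \<Longrightarrow> \<bar>P2 x - P2 y\<bar> \<le> sigma x y"
    and comp: "\<And>c. c \<in> S1 \<Longrightarrow> P2 (g c) = P1 c"
    and xy: "x \<in> Z g" "y \<in> Z g"
  shows "ereal \<bar>pot P1 P2 x - pot P1 P2 y\<bar> \<le> D g x y"
proof -
  let ?p = "pot P1 P2"
  have I2: "iota g 1 ` S1 \<subseteq> iota g 2 ` Zc 2" using iota2_S1[OF gS gi] image_mono[OF S1_Zc[of 2], of "iota g 2"] by simp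
  have p2: "?p u = P2 (iota_inv g 2 u)" if "u \<in> iota g 2 ` Zc 2" for u
    using that pot2[of P2 P1, OF comp] iota_inv2[OF gS gi] by auto
  have p1: "?p u = P1 (iota_inv g 1 u)" if "u \<in> iota g 1 ` Zc 1" for u
    using that pot1 iota_inv1[OF gS gi] by auto
  consider (inf) "(x \<in> iota g 1 ` Zo 1 \<and> y \<in> iota g 2 ` Zo 2) \<or> (x \<in> iota g 2 ` Zo 2 \<and> y \<in> iota g 1 ` Zo 1)"
    | (s) "\<not> ((x \<in> iota g 1 ` Zo 1 \<and> y \<in> iota g 2 ` Zo 2) \<or> (x \<in> iota g 2 ` Zo 2 \<and> y \<in> iota g 1 ` Zo 1))"
          "x \<in> iota g 1 ` S1 \<and> y \<in> iota g 1 ` S1"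
    | (c1) "\<not> ((x \<in> iota g 1 ` Zo 1 \<and> y \<in> iota g 2 ` Zo 2) \<or> (x \<in> iota g 2 ` Zo 2 \<and> y \<in> iota g 1 ` Zo 1))"
          "\<not> (x \<in> iota g 1 ` S1 \<and> y \<in> iota g 1 ` S1)" "x \<in> iota g 1 ` Zc 1 \<and> y \<in> iota g 1 ` Zc 1"
    | (c2) "\<not> ((x \<in> iota g 1 ` Zo 1 \<and> y \<in> iota g 2 ` Zo 2) \<or> (x \<in> iota g 2 ` Zo 2 \<and> y \<in> iota g 1 ` Zo 1))"
          "\<not> (x \<in> iota g 1 ` S1 \<and> y \<in> iota g 1 ` S1)" "\<not> (x \<in> iota g 1 ` Zc 1 \<and> y \<in> iota g 1 ` Zc 1)"
    by blast
  then show ?thesis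
  proof cases
    case inf
    then show ?thesis by (simp add: D_def)
  next
    case s
    then obtain c d where cd: "c \<in> S1" "d \<in> S1" "x = iota g 1 c" "y = iota g 1 d" by auto
    have cd1: "c \<in> Zc 1" "d \<in> Zc 1" using cd S1_Zc by auto
    have gcd: "g c \<in> Zc 2" "g d \<in> Zc 2" using cd gS1[OF gS gi] S1_Zc by auto
    have "D g x y = ereal (min (sigma c d) (sigma (g c) (g d)))"
      unfolding D_def by (subst if_not_P[OF s(1)], subst if_P[OF s(2)]) (simp add: Let_def cd cd1 iota_inv1[OF gS gi])
    moreover have "\<bar>P1 c - P1 d\<bar> \<le> sigma c d" using L1 cd1 by auto
    moreover have "\<bar>P1 c - P1 d\<bar> \<le> sigma (g c) (g d)" using L2[OF gcd] comp cd by auto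
    ultimately show ?thesis using cd cd1 by (simp add: pot1)
  next
    case c1
    then obtain c d where cd: "c \<in> Zc 1" "d \<in> Zc 1" "x = iota g 1 c" "y = iota g 1 d" by auto
    have "D g x y = ereal (sigma c d)"
      unfolding D_def by (subst if_not_P[OF c1(1)], subst if_not_P[OF c1(2)], subst if_P[OF c1(3)]) (simp add: cd iota_inv1[OF gS gi])
    then show ?thesis using cd L1 by (simp add: pot1)
  next
    case c2
    have Zx: "x \<in> iota g 1 ` Zo 1 \<union> iota g 1 ` S1 \<union> iota g 2 ` Zo 2"
     and Zy: "y \<in> iota g 1 ` Zo 1 \<union> iota g 1 ` S1 \<union> iota g 2 ` Zo 2"
      using xy Z_eq3[OF gS gi] by auto
    have o1: "iota g 1 ` Zo 1 \<subseteq> iota g 1 ` Zc 1" using Zo_Zc by auto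
    have s1: "iota g 1 ` S1 \<subseteq> iota g 1 ` Zc 1" using S1_Zc by auto
    have "x \<notin> iota g 1 ` Zo 1"
    proof
      assume "x \<in> iota g 1 ` Zo 1"
      then have "y \<notin> iota g 1 ` Zc 1" using c2(3) o1 by auto
      then have "y \<in> iota g 2 ` Zo 2" using Zy o1 s1 by auto
      then show False using c2(1) \<open>x \<in> iota g 1 ` Zo 1\<close> by auto
    qed
    moreover have "y \<notin> iota g 1 ` Zo 1"
    proof
      assume "y \<in> iota g 1 ` Zo 1"
      then have "x \<notin> iota g 1 ` Zc 1" using c2(3) o1 by auto
      then have "x \<in> iota g 2 ` Zo 2" using Zx o1 s1 by auto
      then show False using c2(1) \<open>y \<in> iota g 1 ` Zo 1\<close> by auto
    qed
    ultimately have "x \<in> iota g 2 ` Zc 2" "y \<in> iota g 2 ` Zc 2"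
      using Zx Zy I2 Zo_Zc[of 2] by auto
    then obtain c d where cd: "c \<in> Zc 2" "d \<in> Zc 2" "x = iota g 2 c" "y = iota g 2 d" by auto
    have "D g x y = ereal (sigma c d)"
      unfolding D_def by (subst if_not_P[OF c2(1)], subst if_not_P[OF c2(2)], subst if_not_P[OF c2(3)]) (simp add: cd iota_inv2[OF gS gi])
    then show ?thesis using cd L2 by (simp add: pot2[of P2 P1, OF comp])
  qed
qed

lemma pot_chain:
  assumes L1: "\<And>x y. x \<in> Zc 1 \<Longrightarrow> y \<in> Zc 1 \<Longrightarrow> \<bar>P1 x - P1 y\<bar> \<le> sigma x y"
    and L2: "\<And>x y. x \<in> Zc 2 \<Longrightarrow> y \<in> Zc 2 \<Longrightarrow> \<bar>P2 x - P2 y\<bar> \<le> sigma x y"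
    and comp: "\<And>c. c \<in> S1 \<Longrightarrow> P2 (g c) = P1 c"
  shows "xs \<noteq> [] \<Longrightarrow> set xs \<subseteq> Z g \<Longrightarrow>
     ereal \<bar>pot P1 P2 (hd xs) - pot P1 P2 (last xs)\<bar> \<le> CS g xs"
proof (induction xs)
  case Nil then show ?case by simp
next
  case (Cons x xs)
  show ?case
  proof (cases "xs = []")
    case True then show ?thesis by simp
  next
    case False
    then obtain y r where xs: "xs = y # r" by (cases xs) auto
    let ?p = "pot P1 P2"
    have "ereal \<bar>?p x - ?p (last xs)\<bar> \<le> ereal \<bar>?p x - ?p y\<bar> + ereal \<bar>?p y - ?p (last xs)\<bar>"
      by simp
    also have "\<dots> \<le> D g x y + CS g xs"
      using pot_D[OF L1 L2 comp, of x y] Cons xs False by (intro add_mono) auto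
    finally show ?thesis using xs by simp
  qed
qed

lemma pot_dZ:
  assumes L1: "\<And>x y. x \<in> Zc 1 \<Longrightarrow> y \<in> Zc 1 \<Longrightarrow> \<bar>P1 x - P1 y\<bar> \<le> sigma x y"
    and L2: "\<And>x y. x \<in> Zc 2 \<Longrightarrow> y \<in> Zc 2 \<Longrightarrow> \<bar>P2 x - P2 y\<bar> \<le> sigma x y"
    and comp: "\<And>c. c \<in> S1 \<Longrightarrow> P2 (g c) = P1 c"
  shows "ereal \<bar>pot P1 P2 x - pot P1 P2 y\<bar> \<le> dZ g x y"
  by (rule dZ_ge) (use pot_chain[OF L1 L2 comp] in fastforce)

lemma dZ_nonneg: "0 \<le> dZ g x y"
proof -
  have "ereal \<bar>pot (\<lambda>_. 0) (\<lambda>_. 0) x - pot (\<lambda>_. 0) (\<lambda>_. 0) y\<bar> \<le> dZ g x y"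
    using sigma_ge0 Zc_norm by (intro pot_dZ) auto
  then show ?thesis by (simp add: pot_def zero_ereal_def)
qed

lemma CS_nonneg: "xs \<noteq> [] \<Longrightarrow> set xs \<subseteq> Z g \<Longrightarrow> 0 \<le> CS g xs"
proof -
  assume "xs \<noteq> []" "set xs \<subseteq> Z g"
  then have "ereal \<bar>pot (\<lambda>_. 0) (\<lambda>_. 0) (hd xs) - pot (\<lambda>_. 0) (\<lambda>_. 0) (last xs)\<bar> \<le> CS g xs"
    using sigma_ge0 Zc_norm by (intro pot_chain) auto
  then show ?thesis by (simp add: pot_def zero_ereal_def)
qed

lemma dZ_refl: "x \<in> Z g \<Longrightarrow> dZ g x x = 0"
  using dZ_le[of "[x]" g] dZ_nonneg[of x x] by simp

lemma dZ_tri: assumes "x \<in> Z g" "y \<in> Z g" "z \<in> Z g"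
  shows "dZ g x z \<le> dZ g x y + dZ g y z"
proof -
  define A where "A = {CS g xs | xs. xs \<noteq> [] \<and> set xs \<subseteq> Z g \<and> hd xs = x \<and> last xs = y}"
  define B where "B = {CS g xs | xs. xs \<noteq> [] \<and> set xs \<subseteq> Z g \<and> hd xs = y \<and> last xs = z}"
  have dA: "dZ g x y = Inf A" unfolding A_def dZ_def CS_def by simp
  have dB: "dZ g y z = Inf B" unfolding B_def dZ_def CS_def by simp
  have "CS g [x,y] \<in> A" unfolding A_def using assms by (intro CollectI exI[of _ "[x,y]"]) simp
  then have A0: "A \<noteq> {}" by auto
  have "CS g [y,z] \<in> B" unfolding B_def using assms by (intro CollectI exI[of _ "[y,z]"]) simp
  then have B0: "B \<noteq> {}" by auto
  have Ap: "\<And>a. a \<in> A \<Longrightarrow> 0 \<le> a" unfolding A_def using CS_nonneg by auto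
  have Bp: "\<And>a. a \<in> B \<Longrightarrow> 0 \<le> a" unfolding B_def using CS_nonneg by auto
  have key: "dZ g x z \<le> a + b" if ha: "a \<in> A" and hb: "b \<in> B" for a b
  proof -
    obtain xs where xs: "a = CS g xs" "xs \<noteq> []" "set xs \<subseteq> Z g" "hd xs = x" "last xs = y"
      using ha unfolding A_def by blast
    obtain ys where ys: "b = CS g ys" "ys \<noteq> []" "set ys \<subseteq> Z g" "hd ys = y" "last ys = z"
      using hb unfolding B_def by blast
    have "dZ g (hd (xs @ tl ys)) (last (xs @ tl ys)) \<le> CS g (xs @ tl ys)"
      using xs ys by (intro dZ_le) (auto dest: list.set_sel(2))
    moreover have "hd (xs @ tl ys) = x" using xs by simp
    moreover have "last (xs @ tl ys) = z" using xs ys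
      by (cases ys; cases "tl ys") auto
    ultimately show ?thesis using CS_append[of xs ys g] xs ys by simp
  qed
  have "dZ g x z \<le> Inf A + b" if "b \<in> B" for b
  proof -
    have "dZ g x z \<le> (INF a\<in>A. a + b)" using key that by (auto intro: INF_greatest)
    also have "\<dots> = (INF a\<in>A. a) + b" using A0 Bp[OF that] by (intro INF_ereal_add_left) (auto intro: Ap)
    finally show ?thesis by simp
  qed
  then have "dZ g x z \<le> (INF b\<in>B. Inf A + b)" by (auto intro: INF_greatest)
  also have "\<dots> = Inf A + (INF b\<in>B. b)"
    using B0 Ap dA dZ_nonneg[of x y] by (intro INF_ereal_add_right) (auto intro: Bp)
  finally show ?thesis using dA dB by simp
qed

end



lemma inner3: "inner (a::real^3) c = a$1*c$1 + a$2*c$2 + a$3*c$3"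
  by (simp add: inner_vec_def sum_3)

lemma norm3: "norm (a::real^3) = 1 \<Longrightarrow> (a$1)^2 + (a$2)^2 + (a$3)^2 = 1"
proof -
  assume "norm a = 1"
  then have "inner a a = 1" by (simp add: power2_norm_eq_inner[symmetric])
  then show ?thesis by (simp add: inner3 power2_eq_square)
qed

definition hh :: "real^3 \<Rightarrow> real" where "hh a = arccos (sqrt (1 - (a$3)^2))"

lemma hh_le: assumes a: "norm a = 1" and c: "c \<in> S1" shows "hh a \<le> sigma a c"
proof -
  have nc: "norm c = 1" "c$3 = 0" using c by (auto simp: S1_def S2_def)
  have a3: "(a$1)^2 + (a$2)^2 + (a$3)^2 = 1" using norm3[OF a] .
  have c3: "(c$1)^2 + (c$2)^2 = 1" using norm3[OF nc(1)] nc(2) by simp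
  have ac: "inner a c = a$1*c$1 + a$2*c$2" using nc by (simp add: inner3)
  have "(a$1*c$1 + a$2*c$2)^2 \<le> ((a$1)^2 + (a$2)^2) * ((c$1)^2 + (c$2)^2)"
    using sum_power2_ge_zero[of "a$1*c$2 - a$2*c$1" 0]
    by (simp add: power2_eq_square algebra_simps)
  then have "(inner a c)^2 \<le> 1 - (a$3)^2" using ac a3 c3 by simp
  then have le: "inner a c \<le> sqrt (1 - (a$3)^2)" by (rule real_le_rsqrt)
  have s1: "sqrt (1 - (a$3)^2) \<le> 1" using zero_le_power2[of "a$3"] by simp
  have "arccos (sqrt (1 - (a$3)^2)) \<le> arccos (inner a c)"
    using inner_abs_le1[OF a nc(1)] le s1 by (intro arccos_le_arccos) auto
  then show ?thesis by (simp add: hh_def sigma_def)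
qed

lemma hh_pos: assumes a: "norm a = 1" "a$3 \<noteq> 0" shows "0 < hh a"
proof -
  have "(a$3)^2 > 0" using a by simp
  then have s: "sqrt (1 - (a$3)^2) < 1" by simp
  have "1 - (a$3)^2 \<ge> 0" using norm3[OF a(1)] zero_le_power2[of "a$1"] zero_le_power2[of "a$2"] by linarith
  then have "0 \<le> sqrt (1 - (a$3)^2)" by (rule real_sqrt_ge_zero)
  then have "- 1 \<le> sqrt (1 - (a$3)^2)" by linarith
  then have "arccos 1 < arccos (sqrt (1 - (a$3)^2))"
    using s by (intro arccos_less_arccos) auto
  then show ?thesis by (simp add: hh_def)
qed

lemma hh_le_pi: assumes a: "norm a = 1" shows "hh a \<le> pi"
proof -
  have "1 - (a$3)^2 \<ge> 0" using norm3[OF a] zero_le_power2[of "a$1"] zero_le_power2[of "a$2"] by linarith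
  then have "0 \<le> sqrt (1 - (a$3)^2)" "sqrt (1 - (a$3)^2) \<le> 1" using zero_le_power2[of "a$3"] by auto
  then have "- 1 \<le> sqrt (1 - (a$3)^2)" "sqrt (1 - (a$3)^2) \<le> 1" by linarith+
  then show ?thesis unfolding hh_def by (rule arccos_ubound)
qed

lemma Zo_3: "a \<in> Zo i \<Longrightarrow> a$3 \<noteq> 0" by (auto simp: Zo_def split: if_splits)
lemma Zo_norm: "a \<in> Zo i \<Longrightarrow> norm a = 1" by (auto simp: Zo_def S2_def split: if_splits)

lemma sigma_small:
  assumes x: "norm x = 1" and y: "norm y = 1" and e: "0 < e" "e \<le> pi"
    and d: "dist x y < sqrt (2 * (1 - cos e))"
  shows "sigma x y < e"
proof -
  have xx: "inner x x = 1" "inner y y = 1" using x y by (simp_all add: power2_norm_eq_inner[symmetric])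
  have "(dist x y)^2 = 2 - 2 * inner x y"
    by (simp add: dist_norm power2_norm_eq_inner inner_diff xx inner_commute)
  moreover have "cos e < 1" using cos_monotone_0_pi[of 0 e] e by simp
  moreover have "(dist x y)^2 < 2 * (1 - cos e)"
    using d by (metis calculation(2) diff_gt_0_iff_gt mult_pos_pos real_sqrt_lt_0_iff real_sqrt_pow2 real_sqrt_pow2_iff
        power_strict_mono zero_le_dist zero_less_numeral  zero_less_two power2_eq_square
        real_sqrt_less_iff abs_of_nonneg real_sqrt_abs zero_le_numeral)
  ultimately have "cos e < inner x y" by simp
  then have "arccos (inner x y) < arccos (cos e)"
    using inner_abs_le1[OF x y] cos_ge_minus_one[of e] by (intro arccos_less_arccos) auto
  then show ?thesis using e by (simp add: sigma_def arccos_cos)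
qed

context
  fixes g :: "real^3 \<Rightarrow> real^3"
  assumes gS: "g ` S1 = S1" and gi: "inj_on g S1"
begin

lemma zero_equiv: "equiv (Z g) (zero_rel g)"
proof (rule equivI)
  show "zero_rel g \<subseteq> Z g \<times> Z g" by (auto simp: zero_rel_def)
  show "refl_on (Z g) (zero_rel g)"
    unfolding refl_on_def zero_rel_def using dZ_refl[OF gS gi] by auto
  show "sym (zero_rel g)" unfolding sym_def zero_rel_def using dZ_sym by auto
  show "trans (zero_rel g)" unfolding trans_def zero_rel_def
  proof (clarsimp)
    fix x y z assume h: "x \<in> Z g" "y \<in> Z g" "z \<in> Z g" "dZ g x y = 0" "dZ g y z = 0"
    then have "dZ g x z \<le> 0" using dZ_tri[OF gS gi h(1-3)] by simp
    then show "dZ g x z = 0" using dZ_nonneg[OF gS gi, of x z] by simp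
  qed
qed

lemma Q_eq: "x \<in> Z g \<Longrightarrow> y \<in> Z g \<Longrightarrow> Q g x = Q g y \<longleftrightarrow> dZ g x y = 0"
  unfolding Q_def using equiv_class_eq_iff[OF zero_equiv, of x y] by (simp add: zero_rel_def)

lemma self_Q: "x \<in> Z g \<Longrightarrow> x \<in> Q g x"
  unfolding Q_def zero_rel_def using dZ_refl[OF gS gi] by auto

lemma dZt_eq: assumes x: "x \<in> Z g" and y: "y \<in> Z g"
  shows "dZt g (Q g x) (Q g y) = dZ g x y"
proof -
  define x' where "x' = (SOME u. u \<in> Q g x)"
  define y' where "y' = (SOME u. u \<in> Q g y)"
  have "x' \<in> Q g x" unfolding x'_def using self_Q[OF x] by (rule someI)
  then have x': "x' \<in> Z g" "dZ g x x' = 0" by (auto simp: Q_def zero_rel_def)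
  have "y' \<in> Q g y" unfolding y'_def using self_Q[OF y] by (rule someI)
  then have y': "y' \<in> Z g" "dZ g y y' = 0" by (auto simp: Q_def zero_rel_def)
  have "dZ g x' y' \<le> dZ g x' x + dZ g x y'" using dZ_tri[OF gS gi x'(1) x y'(1)] .
  also have "\<dots> \<le> dZ g x' x + (dZ g x y + dZ g y y')" using dZ_tri[OF gS gi x y y'(1)] by (intro add_left_mono)
  finally have 1: "dZ g x' y' \<le> dZ g x y" using x' y' dZ_sym[of g x' x] by simp
  have "dZ g x y \<le> dZ g x x' + dZ g x' y" using dZ_tri[OF gS gi x x'(1) y] .
  also have "\<dots> \<le> dZ g x x' + (dZ g x' y' + dZ g y' y)" using dZ_tri[OF gS gi x'(1) y'(1) y] by (intro add_left_mono)
  finally have 2: "dZ g x y \<le> dZ g x' y'" using x' y' dZ_sym[of g y' y] by simp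
  show ?thesis unfolding dZt_def x'_def[symmetric] y'_def[symmetric] using 1 2 by simp
qed

lemma D_le: assumes i: "i \<in> {1,2}" and a: "a \<in> Zc i" and b: "b \<in> Zc i"
  shows "D g (iota g i a) (iota g i b) \<le> ereal (sigma a b)"
proof (cases "i = 1")
  case True
  have n2: "iota g 1 a \<notin> iota g 2 ` Zo 2" "iota g 1 b \<notin> iota g 2 ` Zo 2"
    using disj2[OF gS gi] a b True by auto
  show ?thesis
  proof (cases "iota g 1 a \<in> iota g 1 ` S1 \<and> iota g 1 b \<in> iota g 1 ` S1")
    case T2: True
    show ?thesis unfolding D_def using True n2 T2 a b by (auto simp: Let_def iota_inv1[OF gS gi])
  next
    case F2: False
    show ?thesis unfolding D_def using True n2 F2 a b by (auto simp: Let_def iota_inv1[OF gS gi])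
  qed
next
  case False
  then have i2: "i = 2" using i by auto
  have n1: "iota g 2 a \<notin> iota g 1 ` Zo 1" "iota g 2 b \<notin> iota g 1 ` Zo 1"
    using disj1[OF gS gi] a b i2 by auto
  show ?thesis
  proof (cases "iota g 2 a \<in> iota g 1 ` S1 \<and> iota g 2 b \<in> iota g 1 ` S1")
    case T2: True
    then obtain c d where cd: "c \<in> S1" "d \<in> S1" "iota g 2 a = iota g 1 c" "iota g 2 b = iota g 1 d" by auto
    have ab: "a = g c" "b = g d" using iota12[OF gS gi, of c a] iota12[OF gS gi, of d b] cd a b i2 S1_Zc[of 1] by auto
    then have "D g (iota g 2 a) (iota g 2 b) = ereal (min (sigma c d) (sigma a b))"
    proof -
      have c1: "c \<in> Zc 1" "d \<in> Zc 1" using cd S1_Zc by auto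
      show ?thesis unfolding D_def using ab n1 T2 cd iota_inv1[OF gS gi c1(1)] iota_inv1[OF gS gi c1(2)] by (auto simp: Let_def)
    qed
    then show ?thesis using i2 by simp
  next
    case F2: False
    have "\<not> (iota g 2 a \<in> iota g 1 ` Zc 1 \<and> iota g 2 b \<in> iota g 1 ` Zc 1)"
    proof
      assume "iota g 2 a \<in> iota g 1 ` Zc 1 \<and> iota g 2 b \<in> iota g 1 ` Zc 1"
      then obtain c d where "c \<in> Zc 1" "d \<in> Zc 1" "iota g 2 a = iota g 1 c" "iota g 2 b = iota g 1 d" by auto
      then show False using iota12[OF gS gi, of c a] iota12[OF gS gi, of d b] a b i2 F2 by auto
    qed
    then have "D g (iota g 2 a) (iota g 2 b) = ereal (sigma a b)"
      unfolding D_def using n1 F2 a b i2 by (auto simp: Let_def iota_inv2[OF gS gi])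
    then show ?thesis using i2 by simp
  qed
qed

lemma claim1: assumes i: "i \<in> {1,2}" and a: "a \<in> Zc i" and b: "b \<in> Zc i"
  shows "dZt g (iota_t g i a) (iota_t g i b) \<le> ereal (sigma a b)"
proof -
  have Za: "iota g i a \<in> Z g" and Zb: "iota g i b \<in> Z g" using iota_Z[OF gS gi] i a b by auto
  have "dZt g (iota_t g i a) (iota_t g i b) = dZ g (iota g i a) (iota g i b)"
    unfolding iota_t_def using dZt_eq[OF Za Zb] .
  also have "\<dots> \<le> CS g [iota g i a, iota g i b]" using dZ_le[of "[iota g i a, iota g i b]" g] Za Zb by simp
  also have "\<dots> \<le> ereal (sigma a b)" using D_le[OF i a b] by simp
  finally show ?thesis .
qed

lemma iso_bound:
  assumes i: "i \<in> {1,2}" and a: "a \<in> Zo i" and h: "0 < h" and hS: "\<And>c. c \<in> S1 \<Longrightarrow> h \<le> sigma a c"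
    and b: "b \<in> Zc i"
  shows "ereal (min (sigma a b) h) \<le> dZ g (iota g i a) (iota g i b)"
proof -
  have na: "norm a = 1" using Zo_norm[OF a] .
  have aZ: "a \<in> Zc i" using a Zo_Zc by auto
  define P where "P = (\<lambda>y. min (sigma a y) h)"
  have LP: "\<bar>P x - P y\<bar> \<le> sigma x y" if "x \<in> Zc i" "y \<in> Zc i" for x y
  proof -
    have nx: "norm x = 1" "norm y = 1" using that Zc_norm by auto
    have "sigma a x \<le> sigma a y + sigma y x" "sigma a y \<le> sigma a x + sigma x y"
      using sigma_tri na nx by auto
    then show ?thesis unfolding P_def using sigma_sym[of x y] by (auto simp: abs_le_iff min_def)
  qed
  have LC: "\<bar>(\<lambda>_. h) x - (\<lambda>_. h) y\<bar> \<le> sigma x y" if "x \<in> Zc j" "y \<in> Zc j" for x y j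
    using sigma_ge0 Zc_norm that by auto
  have PS: "P c = h" if "c \<in> S1" for c using hS[OF that] by (simp add: P_def)
  have Ia: "iota g i a \<in> Z g" "iota g i b \<in> Z g" using iota_Z[OF gS gi] i aZ b by auto
  have Pa: "P a = 0" using sigma_refl[OF na] h by (simp add: P_def)
  have Pb: "0 \<le> P b" using sigma_ge0[OF na] Zc_norm[OF b] h by (simp add: P_def)
  show ?thesis
  proof (cases "i = 1")
    case True
    have comp: "(\<lambda>_. h) (g c) = P c" if "c \<in> S1" for c using PS[OF that] by simp
    have "ereal \<bar>pot g P (\<lambda>_. h) (iota g 1 a) - pot g P (\<lambda>_. h) (iota g 1 b)\<bar> \<le> dZ g (iota g 1 a) (iota g 1 b)"
      using LP LC comp True by (intro pot_dZ[OF gS gi]) auto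
    then show ?thesis using True aZ b Pa Pb by (simp add: pot1[OF gS gi] P_def)
  next
    case False
    then have i2: "i = 2" using i by auto
    have comp: "P (g c) = (\<lambda>_. h) c" if "c \<in> S1" for c using PS gS1[OF gS gi that] by simp
    have "ereal \<bar>pot g (\<lambda>_. h) P (iota g 2 a) - pot g (\<lambda>_. h) P (iota g 2 b)\<bar> \<le> dZ g (iota g 2 a) (iota g 2 b)"
      using LP LC comp i2 by (intro pot_dZ[OF gS gi]) auto
    moreover have "pot g (\<lambda>_. h) P (iota g 2 a) = P a" "pot g (\<lambda>_. h) P (iota g 2 b) = P b"
      using pot2[OF gS gi, of P "\<lambda>_. h", OF comp] aZ b i2 by auto
    ultimately show ?thesis using i2 Pa Pb by (simp add: P_def)
  qed
qed

lemma iso_zero: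
  assumes i: "i \<in> {1,2}" and a: "a \<in> Zo i" and b: "b \<in> Zc i"
    and z: "dZ g (iota g i a) (iota g i b) = 0"
  shows "b = a"
proof -
  have na: "norm a = 1" using Zo_norm[OF a] .
  have hp: "0 < hh a" using hh_pos[OF na Zo_3[OF a]] .
  have "ereal (min (sigma a b) (hh a)) \<le> 0"
    using iso_bound[OF i a hp hh_le[OF na] b] z by simp
  then have "sigma a b = 0" using hp sigma_ge0[OF na Zc_norm[OF b]] by (simp add: min_def split: if_splits)
  then show ?thesis using sigma_eq0[OF na Zc_norm[OF b]] by simp
qed

lemma claim2:
  assumes i: "i \<in> {1,2}" and x: "x \<in> Zo i"
  shows "\<exists>U. open U \<and> x \<in> U \<and>
            (\<forall>a \<in> U \<inter> Zo i. \<forall>b \<in> U \<inter> Zo i.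
               dZt g (iota_t g i a) (iota_t g i b) = ereal (sigma a b))"
proof -
  have nx: "norm x = 1" using Zo_norm[OF x] .
  define h0 where "h0 = hh x"
  have h0: "0 < h0" unfolding h0_def using hh_pos[OF nx Zo_3[OF x]] .
  have h0S: "h0 \<le> sigma x c" if "c \<in> S1" for c unfolding h0_def using hh_le[OF nx that] .
  have h0pi: "h0 \<le> pi" unfolding h0_def using hh_le_pi[OF nx] .
  define e where "e = h0 / 3"
  have e: "0 < e" "e \<le> pi" using h0 h0pi by (auto simp: e_def)
  define U where "U = ball x (sqrt (2 * (1 - cos e)))"
  have cu: "cos e < 1" using cos_monotone_0_pi[of 0 e] e by simp
  have "open U" unfolding U_def by simp
  moreover have "x \<in> U" unfolding U_def using cu by simp
  moreover have "dZt g (iota_t g i a) (iota_t g i b) = ereal (sigma a b)"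
    if a: "a \<in> U \<inter> Zo i" and b: "b \<in> U \<inter> Zo i" for a b
  proof -
    have na: "norm a = 1" "norm b = 1" using a b Zo_norm by auto
    have sa: "sigma x a < e" using sigma_small[OF nx na(1) e] a unfolding U_def by auto
    have sb: "sigma x b < e" using sigma_small[OF nx na(2) e] b unfolding U_def by auto
    have hS: "2 * e \<le> sigma a c" if c: "c \<in> S1" for c
    proof -
      have nc: "norm c = 1" using c by (auto simp: S1_def S2_def)
      have "sigma x c \<le> sigma x a + sigma a c" using sigma_tri[OF nx na(1) nc] .
      then show ?thesis using h0S[OF c] sa unfolding e_def by simp
    qed
    have ab: "sigma a b < 2 * e"
      using sigma_tri[OF na(1) nx na(2)] sa sb sigma_sym[of a x] by simp
    have aZ: "a \<in> Zo i" and bZ: "b \<in> Zc i" using a b Zo_Zc by auto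
    have lo: "ereal (min (sigma a b) (2*e)) \<le> dZ g (iota g i a) (iota g i b)"
      using iso_bound[OF i aZ _ hS bZ] e by simp
    have Za: "iota g i a \<in> Z g" "iota g i b \<in> Z g" using iota_Z[OF gS gi] i aZ bZ Zo_Zc by auto
    have eq: "dZt g (iota_t g i a) (iota_t g i b) = dZ g (iota g i a) (iota g i b)"
      unfolding iota_t_def using dZt_eq[OF Za] .
    have up: "dZt g (iota_t g i a) (iota_t g i b) \<le> ereal (sigma a b)"
      using claim1[OF i] aZ bZ Zo_Zc by auto
    show ?thesis using lo up eq ab by (simp add: min_def)
  qed
  ultimately show ?thesis by blast
qed

end



fun SP :: "(real \<Rightarrow> real) \<Rightarrow> real list \<Rightarrow> real" where
  "SP F (a # b # r) = min (b - a) (F b - F a) + SP F (b # r)"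
| "SP F _ = 0"

definition parts :: "real \<Rightarrow> real \<Rightarrow> real list set" where
  "parts s t = {ts. ts \<noteq> [] \<and> sorted ts \<and> hd ts = s \<and> last ts = t}"

definition mm :: "(real \<Rightarrow> real) \<Rightarrow> real \<Rightarrow> real \<Rightarrow> real" where
  "mm F s t = Inf (SP F ` parts s t)"

lemma SP_append: "xs \<noteq> [] \<Longrightarrow> ys \<noteq> [] \<Longrightarrow> last xs = hd ys \<Longrightarrow> SP F (xs @ tl ys) = SP F xs + SP F ys"
proof (induction xs)
  case Nil then show ?case by simp
next
  case (Cons x xs)
  show ?case
  proof (cases xs)
    case Nil then show ?thesis using Cons by (cases ys) auto
  next
    case (Cons y r)
    then show ?thesis using Cons.IH Cons.prems by simp
  qed
qed

lemma sorted_app: "sorted xs \<Longrightarrow> sorted ys \<Longrightarrow> xs \<noteq> [] \<Longrightarrow> ys \<noteq> [] \<Longrightarrow> last xs = hd ys \<Longrightarrow> sorted (xs @ tl ys)"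
proof (induction xs)
  case Nil then show ?case by simp
next
  case (Cons x xs)
  show ?case
  proof (cases xs)
    case Nil then show ?thesis using Cons by (cases ys) auto
  next
    case (Cons y r)
    have IH: "sorted (xs @ tl ys)" using Cons.IH Cons.prems Cons by simp
    have xl: "x \<le> last xs" using Cons.prems(1) Cons by (simp add: last_in_set)
    have "x \<le> z" if "z \<in> set (tl ys)" for z
    proof -
      obtain h tt where ys: "ys = h # tt" using Cons.prems(4) by (cases ys) auto
      have "h \<le> z" using Cons.prems(2) ys that by auto
      moreover have "h = last xs" using Cons.prems(5) ys Cons by simp
      ultimately show ?thesis using xl by simp
    qed
    then show ?thesis using IH Cons.prems(1) by auto
  qed
qed

lemma SP_shift: "(\<And>x. F (x + c) = F x + c) \<Longrightarrow> SP F (map (\<lambda>x. x + c) ts) = SP F ts"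
  by (induction F ts rule: SP.induct) auto

lemma circ_arccos:
  fixes x y p q :: real
  assumes "x \<le> y" "y \<le> x + 2*pi" "p \<le> y - x" "q \<le> x + 2*pi - y"
  shows "min p q \<le> arccos (cos (x - y))"
proof (cases "y - x \<le> pi")
  case True
  then have "arccos (cos (x - y)) = y - x" using assms by (subst arccos_cos_eq_abs) auto
  then show ?thesis using assms by simp
next
  case False
  have "cos (x - y) = cos (x - y + 2*pi)" by simp
  moreover have "arccos (cos (x - y + 2*pi)) = x + 2*pi - y" using assms False
    by (subst arccos_cos_eq_abs) auto
  ultimately show ?thesis using assms by simp
qed

lemma tent: fixes A x B :: real assumes "0 \<le> A" "0 \<le> x" "0 \<le> B"
  shows "\<bar>min A (x + B) - min (A + x) B\<bar> \<le> min x (B + A)"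
  using assms by (simp add: min_def abs_le_iff)

context
  fixes F :: "real \<Rightarrow> real"
  assumes Fm: "mono F" and Fp: "\<And>t. F (t + 2*pi) = F t + 2*pi"
begin

lemma SP_nonneg: "sorted ts \<Longrightarrow> 0 \<le> SP F ts"
proof (induction ts rule: induct_list012)
  case (3 a b r)
  then have "F a \<le> F b" "a \<le> b" using Fm by (auto simp: mono_def)
  then show ?case using 3 by simp
qed auto

lemma SP_nonneg': "sorted ts \<Longrightarrow> 0 \<le> SP F ts" using SP_nonneg by blast

lemma bdd: "bdd_below (SP F ` parts s t)"
  by (rule bdd_belowI[of _ 0]) (auto simp: parts_def intro: SP_nonneg)

lemma parts2: "s \<le> t \<Longrightarrow> [s,t] \<in> parts s t" by (simp add: parts_def)

lemma mm_lower: "ts \<in> parts s t \<Longrightarrow> mm F s t \<le> SP F ts"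
  unfolding mm_def by (rule cInf_lower) (auto intro: bdd)

lemma mm_greatest: "s \<le> t \<Longrightarrow> (\<And>ts. ts \<in> parts s t \<Longrightarrow> c \<le> SP F ts) \<Longrightarrow> c \<le> mm F s t"
  unfolding mm_def using parts2[of s t] by (intro cInf_greatest) auto

lemma mm_nonneg: "s \<le> t \<Longrightarrow> 0 \<le> mm F s t"
  by (rule mm_greatest) (auto simp: parts_def intro: SP_nonneg)

lemma mm_le: "s \<le> t \<Longrightarrow> mm F s t \<le> min (t - s) (F t - F s)"
  using mm_lower[OF parts2[of s t]] by simp

lemma mm_refl: "mm F s s = 0"
proof -
  have "[s] \<in> parts s s" by (simp add: parts_def)
  then have "mm F s s \<le> 0" using mm_lower by fastforce
  then show ?thesis using mm_nonneg[of s s] by simp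
qed

lemma mm_sub: assumes "s \<le> t" "t \<le> w" shows "mm F s w \<le> mm F s t + mm F t w"
proof -
  have key: "mm F s w \<le> SP F P1 + SP F P2" if P1: "P1 \<in> parts s t" and P2: "P2 \<in> parts t w" for P1 P2
  proof -
    have "P1 @ tl P2 \<in> parts s w"
      using P1 P2 sorted_app[of P1 P2] unfolding parts_def
      by (cases P2; cases "tl P2") auto
    then have "mm F s w \<le> SP F (P1 @ tl P2)" by (rule mm_lower)
    also have "\<dots> = SP F P1 + SP F P2" using P1 P2 SP_append[of P1 P2 F] by (simp add: parts_def)
    finally show ?thesis .
  qed
  have "mm F s w - SP F P2 \<le> mm F s t" if P2: "P2 \<in> parts t w" for P2
    using key[OF _ P2] assms by (intro mm_greatest) force+
  then have "mm F s w - mm F s t \<le> mm F t w"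
    using assms by (intro mm_greatest) force+
  then show ?thesis by simp
qed

lemma min_split: "a \<le> t \<Longrightarrow> t \<le> b \<Longrightarrow> min (t - a) (F t - F a) + min (b - t) (F b - F t) \<le> min (b - a) (F b - F a)"
  by (simp add: min_def)

lemma SP_super: "sorted (a # r) \<Longrightarrow> a \<le> t \<Longrightarrow> t \<le> last (a # r) \<Longrightarrow> mm F a t + mm F t (last (a # r)) \<le> SP F (a # r)"
proof (induction r arbitrary: a)
  case Nil
  then show ?case by (simp add: mm_refl)
next
  case (Cons b r)
  have ab: "a \<le> b" and sb: "sorted (b # r)" using Cons.prems(1) by auto
  have bl: "b \<le> last (b # r)" using sb by (cases r) (auto simp: last_in_set)
  define w where "w = last (b # r)"
  have lw: "last (a # b # r) = w" by (simp add: w_def)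
  show ?case
  proof (cases "b \<le> t")
    case True
    have "mm F b t + mm F t w \<le> SP F (b # r)" using Cons.IH[OF sb True] Cons.prems(3) by (simp add: w_def)
    moreover have "mm F a t \<le> mm F a b + mm F b t" using mm_sub ab True by simp
    moreover have "mm F a b \<le> min (b - a) (F b - F a)" using mm_le ab by blast
    ultimately show ?thesis unfolding lw SP.simps by linarith
  next
    case False
    have tw: "t \<le> w" using Cons.prems(3) by (simp add: w_def)
    have "b # r \<in> parts b w" using sb by (simp add: parts_def w_def)
    then have "mm F b w \<le> SP F (b # r)" by (rule mm_lower)
    moreover have "mm F t w \<le> mm F t b + mm F b w" using mm_sub False bl w_def by simp
    moreover have "mm F a t \<le> min (t - a) (F t - F a)" using mm_le Cons.prems(2) by blast
    moreover have "mm F t b \<le> min (b - t) (F b - F t)" using mm_le False by (meson linorder_not_le order_less_imp_le)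
    moreover have "min (t - a) (F t - F a) + min (b - t) (F b - F t) \<le> min (b - a) (F b - F a)"
      using min_split Cons.prems(2) False by simp
    ultimately show ?thesis unfolding lw SP.simps by linarith
  qed
qed

lemma mm_add: assumes "s \<le> t" "t \<le> w" shows "mm F s w = mm F s t + mm F t w"
proof -
  have "mm F s t + mm F t w \<le> mm F s w"
  proof (rule mm_greatest)
    show "s \<le> w" using assms by simp
    fix ts assume "ts \<in> parts s w"
    then obtain r where ts: "ts = s # r" "sorted (s # r)" "last (s # r) = w"
      unfolding parts_def by (cases ts) auto
    then show "mm F s t + mm F t w \<le> SP F ts" using SP_super[of s r t] assms by simp
  qed
  then show ?thesis using mm_sub[OF assms] by simp
qed

lemma Fm2: "F (x - 2*pi) = F x - 2*pi"
  using Fp[of "x - 2*pi"] by simp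

lemma parts_shift: "ts \<in> parts s t \<Longrightarrow> map (\<lambda>x. x + c) ts \<in> parts (s + c) (t + c)"
  unfolding parts_def by (auto simp: sorted_map hd_map last_map)

lemma mm_per: "mm F (s + 2*pi) (t + 2*pi) = mm F s t"
proof -
  have "SP F ` parts (s + 2*pi) (t + 2*pi) = SP F ` parts s t"
  proof
    show "SP F ` parts (s + 2*pi) (t + 2*pi) \<subseteq> SP F ` parts s t"
    proof
      fix y assume "y \<in> SP F ` parts (s + 2*pi) (t + 2*pi)"
      then obtain ts where ts: "ts \<in> parts (s + 2*pi) (t + 2*pi)" "y = SP F ts" by auto
      have "map (\<lambda>x. x + (- 2*pi)) ts \<in> parts s t" using parts_shift[OF ts(1), of "-2*pi"] by simp
      moreover have "SP F (map (\<lambda>x. x + (- 2*pi)) ts) = y"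
        using SP_shift[of F "-2*pi" ts] Fm2 ts(2) by simp
      ultimately show "y \<in> SP F ` parts s t" by (metis image_eqI)
    qed
  next
    show "SP F ` parts s t \<subseteq> SP F ` parts (s + 2*pi) (t + 2*pi)"
    proof
      fix y assume "y \<in> SP F ` parts s t"
      then obtain ts where ts: "ts \<in> parts s t" "y = SP F ts" by auto
      have "map (\<lambda>x. x + 2*pi) ts \<in> parts (s + 2*pi) (t + 2*pi)" using parts_shift[OF ts(1)] by simp
      moreover have "SP F (map (\<lambda>x. x + 2*pi) ts) = y"
        using SP_shift[of F "2*pi" ts] Fp ts(2) by simp
      ultimately show "y \<in> SP F ` parts (s + 2*pi) (t + 2*pi)" by (metis image_eqI)
    qed
  qed
  then show ?thesis unfolding mm_def by simp
qed

definition tentphi :: "real \<Rightarrow> real \<Rightarrow> real" where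
  "tentphi u t = min (mm F u t) (mm F t (u + 2*pi))"

lemma phi_lip:
  assumes "u \<le> t" "t \<le> t'" "t' \<le> u + 2*pi"
  shows "\<bar>tentphi u t - tentphi u t'\<bar> \<le> min (mm F t t') (mm F t' (t + 2*pi))"
proof -
  define A where "A = mm F u t"
  define B' where "B' = mm F t' (u + 2*pi)"
  define x where "x = mm F t t'"
  have A': "mm F u t' = A + x" unfolding A_def x_def using mm_add[of u t t'] assms by simp
  have B: "mm F t (u + 2*pi) = x + B'" unfolding B'_def x_def using mm_add[of t t' "u+2*pi"] assms by simp
  have C: "mm F t' (t + 2*pi) = B' + A"
  proof -
    have "mm F t' (t + 2*pi) = mm F t' (u + 2*pi) + mm F (u + 2*pi) (t + 2*pi)" using mm_add[of t' "u+2*pi" "t+2*pi"] assms by simp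
    also have "mm F (u + 2*pi) (t + 2*pi) = A" unfolding A_def by (rule mm_per)
    finally show ?thesis unfolding B'_def .
  qed
  have nn: "0 \<le> A" "0 \<le> x" "0 \<le> B'" unfolding A_def x_def B'_def using mm_nonneg assms by auto
  have p1: "tentphi u t = min A (x + B')" unfolding tentphi_def A_def[symmetric] B by simp
  have p2: "tentphi u t' = min (A + x) B'" unfolding tentphi_def A' B'_def[symmetric] by simp
  show ?thesis unfolding p1 p2 C x_def[symmetric] using tent[OF nn] .
qed

lemma phi_sigma:
  assumes "u \<le> t" "t \<le> t'" "t' \<le> u + 2*pi"
  shows "\<bar>tentphi u t - tentphi u t'\<bar> \<le> arccos (cos (t - t'))"
    and "\<bar>tentphi u t - tentphi u t'\<bar> \<le> arccos (cos (F t - F t'))"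
proof -
  have tt: "t' \<le> t + 2*pi" using assms by simp
  have le1: "mm F t t' \<le> t' - t" "mm F t t' \<le> F t' - F t" using mm_le[of t t'] assms by auto
  have le2: "mm F t' (t + 2*pi) \<le> t + 2*pi - t'" "mm F t' (t + 2*pi) \<le> F t + 2*pi - F t'"
    using mm_le[OF tt] Fp[of t] by auto
  have Ft1: "F t \<le> F t'" using Fm assms by (auto simp: mono_def)
  have "F t' \<le> F (t + 2*pi)" using Fm tt by (auto simp: mono_def)
  then have Ft: "F t \<le> F t'" "F t' \<le> F t + 2*pi" using Ft1 Fp[of t] by auto
  have c1: "min (mm F t t') (mm F t' (t + 2*pi)) \<le> arccos (cos (t - t'))"
    by (rule circ_arccos) (use assms tt le1 le2 in auto)
  have c2: "min (mm F t t') (mm F t' (t + 2*pi)) \<le> arccos (cos (F t - F t'))"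
    by (rule circ_arccos) (use Ft le1 le2 in auto)
  show "\<bar>tentphi u t - tentphi u t'\<bar> \<le> arccos (cos (t - t'))"
    using phi_lip[OF assms] c1 by (rule order_trans)
  show "\<bar>tentphi u t - tentphi u t'\<bar> \<le> arccos (cos (F t - F t'))"
    using phi_lip[OF assms] c2 by (rule order_trans)
qed

lemma phi_u: "tentphi u u = 0"
  unfolding tentphi_def using mm_refl mm_nonneg[of u "u + 2*pi"] by (simp add: min_def)

lemma phi_pos: assumes "u \<le> s1" "s1 \<le> v" "v \<le> s2" "s2 \<le> u + 2*pi"
  "0 < mm F u s1" "0 < mm F s2 (u + 2*pi)"
  shows "0 < tentphi u v"
proof -
  have "mm F u v = mm F u s1 + mm F s1 v" using mm_add[of u s1 v] assms by simp
  moreover have "mm F v (u + 2*pi) = mm F v s2 + mm F s2 (u + 2*pi)" using mm_add[of v s2 "u+2*pi"] assms by simp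
  ultimately show ?thesis unfolding tentphi_def using assms mm_nonneg[of s1 v] mm_nonneg[of v s2] by simp
qed

end



lemma eqpt_comp: "eqpt t $ 1 = cos t" "eqpt t $ 2 = sin t" "eqpt t $ 3 = 0"
  by (simp_all add: eqpt_def)

lemma eqpt_alt: "eqpt t = cos t *\<^sub>R vector [1,0,0] + sin t *\<^sub>R vector [0,1,0]"
  by (simp add: vec_eq_iff forall_3 eqpt_comp)

lemma eqpt_cont: "continuous_on A eqpt"
  unfolding eqpt_alt[abs_def] by (intro continuous_intros)

lemma inner_eqpt: "inner (eqpt s) (eqpt t) = cos (s - t)"
  by (simp add: inner3 eqpt_comp cos_diff)

lemma eqpt_S1: "eqpt t \<in> S1"
proof -
  have "inner (eqpt t) (eqpt t) = 1" by (simp add: inner_eqpt)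
  then have "norm (eqpt t) = 1" by (simp add: norm_eq_sqrt_inner)
  then show ?thesis by (simp add: S1_def S2_def eqpt_comp)
qed

lemma sigma_eqpt: "sigma (eqpt s) (eqpt t) = arccos (cos (s - t))"
  by (simp add: sigma_def inner_eqpt)

lemma arccos_cos_le: "arccos (cos x) \<le> \<bar>x\<bar>"
proof (cases "\<bar>x\<bar> \<le> pi")
  case True then show ?thesis by (simp add: arccos_cos_eq_abs)
next
  case False then show ?thesis using arccos_ubound[of "cos x"] by simp
qed

lemma eqpt_shift: "eqpt (t - of_int k * (2*pi)) = eqpt t"
proof -
  have k: "cos (of_int k * (2*pi)) = 1" "sin (of_int k * (2*pi)) = 0"
    using cos_int_2pin[of k] sin_int_2pin[of k] by (simp_all add: mult.commute)
  have "cos (t - of_int k * (2*pi)) = cos t" "sin (t - of_int k * (2*pi)) = sin t"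
    by (simp_all only: cos_diff sin_diff k)
  then show ?thesis by (simp add: eqpt_def)
qed

lemma eqpt_2pi: "eqpt (t + 2*pi) = eqpt t"
  using eqpt_shift[of "t + 2*pi" 1] by simp

lemma S1_lift: assumes c: "c \<in> S1" obtains t where "u \<le> t" "t < u + 2*pi" "eqpt t = c"
proof -
  have nc: "norm c = 1" "c$3 = 0" using c by (auto simp: S1_def S2_def)
  have "(c$1)^2 + (c$2)^2 = 1" using norm3[OF nc(1)] nc(2) by simp
  then obtain t0 where t0: "c$1 = cos t0" "c$2 = sin t0" by (metis sincos_total_2pi)
  have ct: "eqpt t0 = c" using t0 nc by (simp add: vec_eq_iff forall_3 eqpt_comp)
  define k where "k = \<lfloor>(t0 - u) / (2*pi)\<rfloor>"
  have l: "of_int k * (2*pi) \<le> t0 - u" unfolding k_def by (rule floor_divide_lower) simp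
  have r: "t0 - u < (of_int k + 1) * (2*pi)" unfolding k_def by (rule floor_divide_upper) simp
  show ?thesis
    by (rule that[of "t0 - of_int k * (2*pi)"]) (use l r ct eqpt_shift in \<open>auto simp: algebra_simps\<close>)
qed

lemma eqpt_inj: assumes "u \<le> s" "s < u + 2*pi" "u \<le> t" "t < u + 2*pi" "eqpt s = eqpt t"
  shows "s = t"
proof -
  have "cos (s - t) = 1" using inner_eqpt[of s t] assms(5) inner_eqpt[of t t] by simp
  then obtain n :: int where n: "s - t = of_int n * 2 * pi" by (auto simp: cos_one_2pi_int)
  have "\<bar>s - t\<bar> < 2 * pi" using assms by (simp add: abs_less_iff)
  then have "\<bar>of_int n\<bar> * (2 * pi) < 1 * (2 * pi)" using n by (simp add: abs_mult)
  then have "\<bar>of_int n\<bar> < (1::real)" by (rule mult_right_less_imp_less) simp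
  then have "n = 0" by linarith
  then show ?thesis using n by simp
qed

definition tau :: "real \<Rightarrow> real^3 \<Rightarrow> real" where
  "tau u c = (SOME t. u \<le> t \<and> t < u + 2*pi \<and> eqpt t = c)"

lemma tau: "c \<in> S1 \<Longrightarrow> u \<le> tau u c \<and> tau u c < u + 2*pi \<and> eqpt (tau u c) = c"
  unfolding tau_def by (rule someI_ex) (metis S1_lift)

lemma tau_eqpt: "u \<le> t \<Longrightarrow> t < u + 2*pi \<Longrightarrow> tau u (eqpt t) = t"
  using tau[OF eqpt_S1, of u t] eqpt_inj[of u _ t] by blast

lemma ext_lip:
  fixes p :: "real^3 \<Rightarrow> real" and k :: "real^3 \<Rightarrow> real^3"
  assumes ne: "S1 \<noteq> {}" and kn: "\<And>c. c \<in> S1 \<Longrightarrow> norm (k c) = 1"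
    and pn: "\<And>c. c \<in> S1 \<Longrightarrow> 0 \<le> p c"
    and pl: "\<And>c d. c \<in> S1 \<Longrightarrow> d \<in> S1 \<Longrightarrow> \<bar>p c - p d\<bar> \<le> sigma (k c) (k d)"
  defines "PP \<equiv> \<lambda>y. Inf ((\<lambda>c. p c + sigma y (k c)) ` S1)"
  shows "\<And>x y. norm x = 1 \<Longrightarrow> norm y = 1 \<Longrightarrow> \<bar>PP x - PP y\<bar> \<le> sigma x y"
    and "\<And>c. c \<in> S1 \<Longrightarrow> PP (k c) = p c"
proof -
  have bdd: "bdd_below ((\<lambda>c. p c + sigma y (k c)) ` S1)" if "norm y = 1" for y
    by (rule bdd_belowI[of _ 0]) (use pn sigma_ge0 kn that in force)
  have one: "PP x - sigma x y \<le> PP y" if n: "norm x = 1" "norm y = 1" for x y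
  proof -
    have "PP x - sigma x y \<le> p c + sigma y (k c)" if c: "c \<in> S1" for c
    proof -
      have "PP x \<le> p c + sigma x (k c)" unfolding PP_def using c bdd[OF n(1)] by (intro cInf_lower) auto
      moreover have "sigma x (k c) \<le> sigma x y + sigma y (k c)" using sigma_tri n kn c by simp
      ultimately show ?thesis by simp
    qed
    then show ?thesis unfolding PP_def using ne by (intro cInf_greatest) auto
  qed
  show "\<bar>PP x - PP y\<bar> \<le> sigma x y" if "norm x = 1" "norm y = 1" for x y
    using one[OF that] one[of y x] that sigma_sym[of x y] by (simp add: abs_le_iff)
  show "PP (k c) = p c" if c: "c \<in> S1" for c
  proof -
    have "PP (k c) \<le> p c + sigma (k c) (k c)" unfolding PP_def using c bdd[OF kn[OF c]] by (intro cInf_lower) auto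
    then have le: "PP (k c) \<le> p c" using sigma_refl[OF kn[OF c]] by simp
    have "p c \<le> PP (k c)" unfolding PP_def using ne
    proof (intro cInf_greatest)
      fix z assume "z \<in> (\<lambda>d. p d + sigma (k c) (k d)) ` S1"
      then obtain d where d: "d \<in> S1" "z = p d + sigma (k c) (k d)" by auto
      then show "p c \<le> z" using pl[OF c d(1)] by (simp add: abs_le_iff)
    qed auto
    then show ?thesis using le by simp
  qed
qed

context
  fixes g :: "real^3 \<Rightarrow> real^3" and F :: "real \<Rightarrow> real"
  assumes gS: "g ` S1 = S1" and gi: "inj_on g S1"
    and Fm: "mono F" and Fp: "\<And>t. F (t + 2*pi) = F t + 2*pi"
    and geq: "\<And>t. g (eqpt t) = eqpt (F t)"
begin

lemma D_S1: assumes c: "c \<in> S1" and d: "d \<in> S1"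
  shows "D g (iota g 1 c) (iota g 1 d) = ereal (min (sigma c d) (sigma (g c) (g d)))"
proof -
  have c1: "c \<in> Zc 1" "d \<in> Zc 1" using c d S1_Zc by auto
  have n2: "iota g 1 c \<notin> iota g 2 ` Zo 2" "iota g 1 d \<notin> iota g 2 ` Zo 2"
    using disj2[OF gS gi] c1 by auto
  have n1: "iota g 1 c \<notin> iota g 1 ` Zo 1" "iota g 1 d \<notin> iota g 1 ` Zo 1"
    using iota1_inj[OF gS gi] c1 Zo_Zc[of 1] c d Zo_S1[of 1] by blast+
  show ?thesis unfolding D_def using n1 n2 c d iota_inv1[OF gS gi c1(1)] iota_inv1[OF gS gi c1(2)]
    by (auto simp: Let_def)
qed

lemma CS_ub: "sorted ts \<Longrightarrow> CS g (map (\<lambda>t. iota g 1 (eqpt t)) ts) \<le> ereal (SP F ts)"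
proof (induction ts rule: induct_list012)
  case (3 a b r)
  define mab where "mab = min (b - a) (F b - F a)"
  have ab: "a \<le> b" "F a \<le> F b" using 3(3) Fm by (auto simp: mono_def)
  have "D g (iota g 1 (eqpt a)) (iota g 1 (eqpt b)) = ereal (min (sigma (eqpt a) (eqpt b)) (sigma (eqpt (F a)) (eqpt (F b))))"
    using D_S1[OF eqpt_S1 eqpt_S1] geq by simp
  also have "\<dots> \<le> ereal mab" unfolding mab_def
    using arccos_cos_le[of "a - b"] arccos_cos_le[of "F a - F b"] ab by (auto simp: sigma_eqpt min_def)
  finally have "D g (iota g 1 (eqpt a)) (iota g 1 (eqpt b)) \<le> ereal mab" .
  moreover have "CS g (map (\<lambda>t. iota g 1 (eqpt t)) (b # r)) \<le> ereal (SP F (b # r))" using 3 by simp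
  ultimately have "D g (iota g 1 (eqpt a)) (iota g 1 (eqpt b)) + CS g (map (\<lambda>t. iota g 1 (eqpt t)) (b # r))
     \<le> ereal mab + ereal (SP F (b # r))" by (rule add_mono)
  then show ?case unfolding SP.simps mab_def[symmetric] by simp
qed (auto simp: CS_def)

lemma dZ_ub: assumes "s \<le> t" shows "dZ g (iota g 1 (eqpt s)) (iota g 1 (eqpt t)) \<le> ereal (mm F s t)"
proof -
  have ch: "dZ g (iota g 1 (eqpt s)) (iota g 1 (eqpt t)) \<le> ereal (SP F ts)" if ts: "ts \<in> parts s t" for ts
  proof -
    have tsp: "ts \<noteq> []" "sorted ts" "hd ts = s" "last ts = t" using ts by (auto simp: parts_def)
    have "set (map (\<lambda>t. iota g 1 (eqpt t)) ts) \<subseteq> Z g"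
      using iota_Z[OF gS gi, of 1] eqpt_S1 S1_Zc[of 1] by auto
    then have "dZ g (hd (map (\<lambda>t. iota g 1 (eqpt t)) ts)) (last (map (\<lambda>t. iota g 1 (eqpt t)) ts))
       \<le> CS g (map (\<lambda>t. iota g 1 (eqpt t)) ts)" using tsp by (intro dZ_le) auto
    also have "\<dots> \<le> ereal (SP F ts)" using CS_ub tsp by simp
    finally show ?thesis using tsp by (simp add: hd_map last_map)
  qed
  define d where "d = dZ g (iota g 1 (eqpt s)) (iota g 1 (eqpt t))"
  have "d \<le> ereal (SP F [s,t])" unfolding d_def using ch[OF parts2[OF Fm Fp assms]] .
  moreover have "0 \<le> d" unfolding d_def by (rule dZ_nonneg[OF gS gi])
  ultimately obtain r where r: "d = ereal r" by (cases d) auto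
  have "r \<le> mm F s t" using assms
  proof (rule mm_greatest[OF Fm Fp])
    fix ts assume "ts \<in> parts s t" then show "r \<le> SP F ts" using ch[of ts] r d_def by simp
  qed
  then show ?thesis using r d_def by simp
qed

definition phi0 :: "real \<Rightarrow> real^3 \<Rightarrow> real" where
  "phi0 u c = tentphi F u (tau u c)"

lemma phi_nonneg: "u \<le> t \<Longrightarrow> t \<le> u + 2*pi \<Longrightarrow> 0 \<le> tentphi F u t"
  unfolding tentphi_def[OF Fm Fp] using mm_nonneg[OF Fm Fp, of u t] mm_nonneg[OF Fm Fp, of t "u+2*pi"] by simp

lemma phi0_lip: assumes c: "c \<in> S1" and d: "d \<in> S1"
  shows "\<bar>phi0 u c - phi0 u d\<bar> \<le> sigma c d" and "\<bar>phi0 u c - phi0 u d\<bar> \<le> sigma (g c) (g d)"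
proof -
  have key: "\<bar>phi0 u c - phi0 u d\<bar> \<le> sigma c d \<and> \<bar>phi0 u c - phi0 u d\<bar> \<le> sigma (g c) (g d)"
    if c: "c \<in> S1" and d: "d \<in> S1" and le: "tau u c \<le> tau u d" for c d
  proof -
    have t1: "u \<le> tau u c" "tau u c < u + 2*pi" "eqpt (tau u c) = c" using tau[OF c] by auto
    have t2: "u \<le> tau u d" "tau u d < u + 2*pi" "eqpt (tau u d) = d" using tau[OF d] by auto
    have "\<bar>tentphi F u (tau u c) - tentphi F u (tau u d)\<bar> \<le> arccos (cos (tau u c - tau u d))"
      "\<bar>tentphi F u (tau u c) - tentphi F u (tau u d)\<bar> \<le> arccos (cos (F (tau u c) - F (tau u d)))"
      using phi_sigma[OF Fm Fp, of u "tau u c" "tau u d"] t1 t2 le by auto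
    moreover have "sigma c d = arccos (cos (tau u c - tau u d))"
      using t1 t2 sigma_eqpt by metis
    moreover have "sigma (g c) (g d) = arccos (cos (F (tau u c) - F (tau u d)))"
      using t1 t2 sigma_eqpt geq by metis
    ultimately show ?thesis unfolding phi0_def by simp
  qed
  have "\<bar>phi0 u c - phi0 u d\<bar> \<le> sigma c d \<and> \<bar>phi0 u c - phi0 u d\<bar> \<le> sigma (g c) (g d)"
  proof (cases "tau u c \<le> tau u d")
    case True then show ?thesis using key c d by blast
  next
    case False then show ?thesis using key[OF d c] sigma_sym[of c d] sigma_sym[of "g c" "g d"] by (simp add: abs_minus_commute)
  qed
  then show "\<bar>phi0 u c - phi0 u d\<bar> \<le> sigma c d" and "\<bar>phi0 u c - phi0 u d\<bar> \<le> sigma (g c) (g d)" by auto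
qed

lemma S1_ne: "S1 \<noteq> {}" using eqpt_S1 by blast

lemma phi0_nonneg: "c \<in> S1 \<Longrightarrow> 0 \<le> phi0 u c"
  unfolding phi0_def using tau phi_nonneg by (meson less_eq_real_def)

lemma S1_norm: "c \<in> S1 \<Longrightarrow> norm c = 1" by (auto simp: S1_def S2_def)

lemma phi0_dZ: assumes a: "a \<in> S1" and b: "b \<in> S1"
  shows "ereal \<bar>phi0 u a - phi0 u b\<bar> \<le> dZ g (iota g 1 a) (iota g 1 b)"
proof -
  define P1 where "P1 = (\<lambda>y. Inf ((\<lambda>c. phi0 u c + sigma y (id c)) ` S1))"
  define P2 where "P2 = (\<lambda>y. Inf ((\<lambda>c. phi0 u c + sigma y (g c)) ` S1))"
  have e1: "\<And>x y. norm x = 1 \<Longrightarrow> norm y = 1 \<Longrightarrow> \<bar>P1 x - P1 y\<bar> \<le> sigma x y"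
       "\<And>c. c \<in> S1 \<Longrightarrow> P1 (id c) = phi0 u c"
    unfolding P1_def using ext_lip[of id "phi0 u"] S1_ne S1_norm phi0_nonneg phi0_lip(1) by auto
  have e2: "\<And>x y. norm x = 1 \<Longrightarrow> norm y = 1 \<Longrightarrow> \<bar>P2 x - P2 y\<bar> \<le> sigma x y"
       "\<And>c. c \<in> S1 \<Longrightarrow> P2 (g c) = phi0 u c"
    unfolding P2_def using ext_lip[of g "phi0 u"] S1_ne S1_norm gS1[OF gS gi] phi0_nonneg phi0_lip(2) by auto
  have "ereal \<bar>pot g P1 P2 (iota g 1 a) - pot g P1 P2 (iota g 1 b)\<bar> \<le> dZ g (iota g 1 a) (iota g 1 b)"
    using e1 e2 Zc_norm by (intro pot_dZ[OF gS gi]) auto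
  moreover have "pot g P1 P2 (iota g 1 a) = phi0 u a" "pot g P1 P2 (iota g 1 b) = phi0 u b"
    using pot1[OF gS gi] a b S1_Zc[of 1] e1(2) by auto
  ultimately show ?thesis by simp
qed

lemma arc:
  assumes uv: "u < v" "v < u + 2*pi" and z: "dZ g (iota g 1 (eqpt u)) (iota g 1 (eqpt v)) = 0"
  shows "(\<forall>s\<in>{u..v}. dZ g (iota g 1 (eqpt s)) (iota g 1 (eqpt u)) = 0) \<or>
         (\<forall>s\<in>{v..u+2*pi}. dZ g (iota g 1 (eqpt s)) (iota g 1 (eqpt u)) = 0)"
proof (rule ccontr)
  assume "\<not> ?thesis"
  then obtain s1 s2 where s1: "s1 \<in> {u..v}" "dZ g (iota g 1 (eqpt s1)) (iota g 1 (eqpt u)) \<noteq> 0"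
    and s2: "s2 \<in> {v..u+2*pi}" "dZ g (iota g 1 (eqpt s2)) (iota g 1 (eqpt u)) \<noteq> 0" by auto
  have "0 < dZ g (iota g 1 (eqpt u)) (iota g 1 (eqpt s1))"
    using s1(2) dZ_nonneg[OF gS gi] dZ_sym by (metis order_le_less)
  then have "0 < ereal (mm F u s1)" using dZ_ub[of u s1] s1(1) by (metis atLeastAtMost_iff less_le_trans)
  then have m1: "0 < mm F u s1" by simp
  have "0 < dZ g (iota g 1 (eqpt s2)) (iota g 1 (eqpt (u + 2*pi)))"
    using s2(2) dZ_nonneg[OF gS gi] eqpt_2pi by (metis order_le_less)
  then have "0 < ereal (mm F s2 (u + 2*pi))" using dZ_ub[of s2 "u + 2*pi"] s2(1) by (metis atLeastAtMost_iff less_le_trans)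
  then have m2: "0 < mm F s2 (u + 2*pi)" by simp
  have pv: "0 < tentphi F u v" using phi_pos[OF Fm Fp, of u s1 v s2] s1 s2 m1 m2 by auto
  have "phi0 u (eqpt u) = 0" unfolding phi0_def using tau_eqpt[of u u] phi_u[OF Fm Fp] by simp
  moreover have "phi0 u (eqpt v) = tentphi F u v" unfolding phi0_def using tau_eqpt[of u v] uv by simp
  ultimately have "ereal (tentphi F u v) \<le> 0" using phi0_dZ[OF eqpt_S1 eqpt_S1, of u u v] z pv by simp
  then show False using pv by simp
qed

end



lemma S1n: "c \<in> S1 \<Longrightarrow> norm c = 1" by (auto simp: S1_def S2_def)

context
  fixes g :: "real^3 \<Rightarrow> real^3" and F :: "real \<Rightarrow> real"
  assumes gS: "g ` S1 = S1" and gi: "inj_on g S1"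
    and Fm: "mono F" and Fp: "\<And>t. F (t + 2*pi) = F t + 2*pi"
    and geq: "\<And>t. g (eqpt t) = eqpt (F t)"
begin

lemma dZ_sig1: "c \<in> Zc 1 \<Longrightarrow> d \<in> Zc 1 \<Longrightarrow> dZ g (iota g 1 c) (iota g 1 d) \<le> ereal (sigma c d)"
proof -
  assume c: "c \<in> Zc 1" and d: "d \<in> Zc 1"
  have Z: "iota g 1 c \<in> Z g" "iota g 1 d \<in> Z g" using iota_Z[OF gS gi] c d by auto
  have "dZ g (iota g 1 c) (iota g 1 d) \<le> CS g [iota g 1 c, iota g 1 d]"
    using dZ_le[of "[iota g 1 c, iota g 1 d]" g] Z by simp
  also have "\<dots> \<le> ereal (sigma c d)" using D_le[OF gS gi, of 1 c d] c d by simp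
  finally show ?thesis .
qed

lemma S1_closed_seq: assumes x: "\<And>n. x n \<in> S1" and l: "x \<longlonglongrightarrow> l" shows "l \<in> S1"
proof -
  have t1: "(\<lambda>n. norm (x n)) \<longlonglongrightarrow> norm l" using l by (rule tendsto_norm)
  have "(\<lambda>n. norm (x n)) = (\<lambda>n. 1)" using x by (auto simp: S1_def S2_def)
  then have t2: "(\<lambda>n. norm (x n)) \<longlonglongrightarrow> 1" by simp
  have n: "norm l = 1" using LIMSEQ_unique[OF t1 t2] .
  have t3: "(\<lambda>n. x n $ 3) \<longlonglongrightarrow> l $ 3" using l by (rule tendsto_vec_nth)
  have "(\<lambda>n. x n $ 3) = (\<lambda>n. 0)" using x by (auto simp: S1_def)
  then have t4: "(\<lambda>n. x n $ 3) \<longlonglongrightarrow> 0" by simp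
  have "l $ 3 = 0" using LIMSEQ_unique[OF t3 t4] .
  then show ?thesis using n by (simp add: S1_def S2_def)
qed

lemma C_compact_connected:
  assumes w: "w \<in> Z g"
  defines "C \<equiv> {c \<in> S1. dZ g (iota g 1 c) w = 0}"
  shows "compact C \<and> connected C"
proof -
  have S1Z: "iota g 1 c \<in> Z g" if "c \<in> S1" for c using iota_Z[OF gS gi, of 1 c] S1_Zc that by auto
  have closed: "closed C"
    unfolding closed_sequential_limits
  proof (intro allI impI, elim conjE)
    fix x :: "nat \<Rightarrow> real^3" and l assume xC: "\<forall>n. x n \<in> C" and xl: "x \<longlonglongrightarrow> l"
    have xS: "\<And>n. x n \<in> S1" using xC C_def by auto
    have lS: "l \<in> S1" using S1_closed_seq[OF xS xl] .
    define d where "d = dZ g (iota g 1 l) w"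
    have d0: "0 \<le> d" unfolding d_def by (rule dZ_nonneg[OF gS gi])
    have bnd: "d \<le> ereal e" if e: "0 < e" "e \<le> pi" for e
    proof -
      have "0 < sqrt (2 * (1 - cos e))" using cos_monotone_0_pi[of 0 e] e by simp
      then obtain n where n: "dist (x n) l < sqrt (2 * (1 - cos e))"
        using xl unfolding lim_sequentially by (metis order_refl)
      have sig: "sigma l (x n) < e"
        using sigma_small[OF S1n[OF lS] S1n[OF xS[of n]] e] n by (simp add: dist_commute)
      have "d \<le> dZ g (iota g 1 l) (iota g 1 (x n)) + dZ g (iota g 1 (x n)) w"
        unfolding d_def using dZ_tri[OF gS gi S1Z[OF lS] S1Z[OF xS[of n]] w] .
      also have "dZ g (iota g 1 (x n)) w = 0" using xC C_def by auto
      also have "dZ g (iota g 1 l) (iota g 1 (x n)) \<le> ereal (sigma l (x n))"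
        using dZ_sig1 lS xS[of n] S1_Zc[of 1] by auto
      finally have "d \<le> ereal (sigma l (x n))" by simp
      moreover have "ereal (sigma l (x n)) \<le> ereal e" using sig by simp
      ultimately show ?thesis by (rule order_trans)
    qed
    have "d = 0"
    proof (rule ccontr)
      assume "d \<noteq> 0"
      have "d \<le> ereal pi" using bnd[of pi] pi_gt_zero by simp
      then obtain r where r: "d = ereal r" using d0 by (cases d) auto
      then have rp: "0 < r" using d0 \<open>d \<noteq> 0\<close> by simp
      have "r \<le> min (r/2) pi" using bnd[of "min (r/2) pi"] rp pi_gt_zero r by simp
      then show False using rp by simp
    qed
    then show "l \<in> C" using lS C_def d_def by simp
  qed
  have bounded: "bounded C"
    by (rule bounded_subset[OF bounded_cball[of 0 1]]) (auto simp: C_def S1_def S2_def)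
  have compact: "compact C" using closed bounded by (simp add: compact_eq_bounded_closed)
  have connected: "connected C"
  proof (cases "C = {}")
    case True then show ?thesis by simp
  next
    case False
    then obtain a where aC: "a \<in> C" by auto
    have aS: "a \<in> S1" and aw: "dZ g (iota g 1 a) w = 0" using aC C_def by auto
    obtain u where u: "eqpt u = a" using S1_lift[OF aS, of 0] by metis
    have inC: "eqpt s \<in> C" if "dZ g (iota g 1 (eqpt s)) (iota g 1 (eqpt u)) = 0" for s
    proof -
      have "dZ g (iota g 1 (eqpt s)) w \<le> dZ g (iota g 1 (eqpt s)) (iota g 1 a) + dZ g (iota g 1 a) w"
        using dZ_tri[OF gS gi S1Z[OF eqpt_S1] S1Z[OF aS] w] .
      then have "dZ g (iota g 1 (eqpt s)) w \<le> 0" using that aw u by simp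
      then show ?thesis using dZ_nonneg[OF gS gi, of "iota g 1 (eqpt s)" w] eqpt_S1 C_def by auto
    qed
    have arcb: "\<exists>S. S \<subseteq> C \<and> connected S \<and> a \<in> S \<and> b \<in> S" if bC: "b \<in> C" for b
    proof (cases "b = a")
      case True then show ?thesis using aC by (intro exI[of _ "{a}"]) auto
    next
      case False
      have bS: "b \<in> S1" and bw: "dZ g (iota g 1 b) w = 0" using bC C_def by auto
      define v where "v = tau u b"
      have v: "u \<le> v" "v < u + 2*pi" "eqpt v = b" using tau[OF bS, of u] v_def by auto
      have uv: "u < v" using v u False by (metis order_le_less)
      have "dZ g (iota g 1 a) (iota g 1 b) \<le> dZ g (iota g 1 a) w + dZ g w (iota g 1 b)"
        using dZ_tri[OF gS gi S1Z[OF aS] w S1Z[OF bS]] .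
      then have "dZ g (iota g 1 a) (iota g 1 b) \<le> 0" using aw bw dZ_sym[of g w "iota g 1 b"] by simp
      then have z: "dZ g (iota g 1 (eqpt u)) (iota g 1 (eqpt v)) = 0"
        using dZ_nonneg[OF gS gi, of "iota g 1 a" "iota g 1 b"] u v by simp
      from arc[OF gS gi Fm Fp geq uv v(2) z]
      show ?thesis
      proof
        assume h: "\<forall>s\<in>{u..v}. dZ g (iota g 1 (eqpt s)) (iota g 1 (eqpt u)) = 0"
        have "eqpt ` {u..v} \<subseteq> C" using h inC by auto
        moreover have "connected (eqpt ` {u..v})" by (rule connected_continuous_image[OF eqpt_cont connected_Icc])
        moreover have "a \<in> eqpt ` {u..v}" using u uv by (intro image_eqI[of _ _ u]) auto
        moreover have "b \<in> eqpt ` {u..v}" using v uv by (intro image_eqI[of _ _ v]) auto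
        ultimately show ?thesis by blast
      next
        assume h: "\<forall>s\<in>{v..u+2*pi}. dZ g (iota g 1 (eqpt s)) (iota g 1 (eqpt u)) = 0"
        have "a = eqpt (u + 2*pi)" using u eqpt_2pi by simp
        have "eqpt ` {v..u+2*pi} \<subseteq> C" using h inC by auto
        moreover have "connected (eqpt ` {v..u+2*pi})" by (rule connected_continuous_image[OF eqpt_cont connected_Icc])
        moreover have "a \<in> eqpt ` {v..u+2*pi}" using \<open>a = eqpt (u + 2*pi)\<close> v by (intro image_eqI[of _ _ "u+2*pi"]) auto
        moreover have "b \<in> eqpt ` {v..u+2*pi}" using v by (intro image_eqI[of _ _ v]) auto
        ultimately show ?thesis by blast
      qed
    qed
    define AA where "AA = {S. S \<subseteq> C \<and> connected S \<and> a \<in> S}"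
    have "C = \<Union>AA"
    proof
      show "C \<subseteq> \<Union>AA" using arcb unfolding AA_def by blast
      show "\<Union>AA \<subseteq> C" unfolding AA_def by blast
    qed
    moreover have "connected (\<Union>AA)"
      by (rule connected_Union) (auto simp: AA_def)
    ultimately show ?thesis by simp
  qed
  show ?thesis using compact connected by simp
qed

end



theorem lemma3p3:
  fixes g :: "real^3 \<Rightarrow> real^3" and i :: nat
  assumes "orient_pres_homeo g"
    and "i \<in> {1, 2}"
  shows "(\<forall>a \<in> Zc i. \<forall>b \<in> Zc i. dZt g (iota_t g i a) (iota_t g i b) \<le> ereal (sigma a b))
       \<and> (\<forall>x \<in> Zo i. \<exists>U. open U \<and> x \<in> U \<and>
            (\<forall>a \<in> U \<inter> Zo i. \<forall>b \<in> U \<inter> Zo i.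
               dZt g (iota_t g i a) (iota_t g i b) = ereal (sigma a b)))
       \<and> (\<forall>z \<in> Zt g.
            compact {a \<in> Zc i. iota_t g i a = z}
          \<and> connected {a \<in> Zc i. iota_t g i a = z}
          \<and> ((\<exists>a b. a \<noteq> b \<and> a \<in> {a \<in> Zc i. iota_t g i a = z} \<and> b \<in> {a \<in> Zc i. iota_t g i a = z})
               \<longrightarrow> {a \<in> Zc i. iota_t g i a = z} \<subseteq> S1))"
proof -
  obtain h where hom: "homeomorphism S1 S1 g h" using assms(1) unfolding orient_pres_homeo_def by blast
  obtain F where Fs: "strict_mono F" and Fp: "\<And>t. F (t + 2*pi) = F t + 2*pi"
    and geq: "\<And>t. g (eqpt t) = eqpt (F t)" using assms(1) unfolding orient_pres_homeo_def by blast
  have gS: "g ` S1 = S1" and gc: "continuous_on S1 g" using hom by (auto simp: homeomorphism_def)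
  have gi: "inj_on g S1" using hom unfolding homeomorphism_def by (metis inj_on_inverseI)
  have Fm: "mono F" using Fs by (rule strict_mono_mono)
  have i: "i \<in> {1,2}" using assms(2) .
  have c1: "\<forall>a \<in> Zc i. \<forall>b \<in> Zc i. dZt g (iota_t g i a) (iota_t g i b) \<le> ereal (sigma a b)"
    using claim1[OF gS gi i] by blast
  have c2: "\<forall>x \<in> Zo i. \<exists>U. open U \<and> x \<in> U \<and>
            (\<forall>a \<in> U \<inter> Zo i. \<forall>b \<in> U \<inter> Zo i.
               dZt g (iota_t g i a) (iota_t g i b) = ereal (sigma a b))"
    using claim2[OF gS gi i] by blast
  have c3: "compact {a \<in> Zc i. iota_t g i a = z}
          \<and> connected {a \<in> Zc i. iota_t g i a = z}
          \<and> ((\<exists>a b. a \<noteq> b \<and> a \<in> {a \<in> Zc i. iota_t g i a = z} \<and> b \<in> {a \<in> Zc i. iota_t g i a = z})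
               \<longrightarrow> {a \<in> Zc i. iota_t g i a = z} \<subseteq> S1)" if zZ: "z \<in> Zt g" for z
  proof -
    obtain w where w: "w \<in> Z g" "z = Q g w"
      using zZ unfolding Zt_def Q_def by (auto elim: quotientE)
    define P where "P = {a \<in> Zc i. iota_t g i a = z}"
    have IZ: "iota g i a \<in> Z g" if "a \<in> Zc i" for a using iota_Z[OF gS gi i that] .
    have Pc: "P = {a \<in> Zc i. dZ g (iota g i a) w = 0}"
      unfolding P_def iota_t_def w(2) using Q_eq[OF gS gi IZ w(1)] by auto
    show ?thesis
    proof (cases "\<exists>a0. a0 \<in> P \<inter> Zo i")
      case True
      then obtain a0 where a0: "a0 \<in> P" "a0 \<in> Zo i" by auto
      have a0w: "dZ g (iota g i a0) w = 0" using a0 Pc by auto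
      have "P = {a0}"
      proof
        show "P \<subseteq> {a0}"
        proof
          fix b assume b: "b \<in> P"
          then have bZ: "b \<in> Zc i" and bw: "dZ g (iota g i b) w = 0" using Pc by auto
          have a0Z: "a0 \<in> Zc i" using a0 Zo_Zc by auto
          have "dZ g (iota g i a0) (iota g i b) \<le> dZ g (iota g i a0) w + dZ g w (iota g i b)"
            using dZ_tri[OF gS gi IZ[OF a0Z] w(1) IZ[OF bZ]] .
          then have "dZ g (iota g i a0) (iota g i b) \<le> 0" using a0w bw dZ_sym[of g w "iota g i b"] by simp
          then have "dZ g (iota g i a0) (iota g i b) = 0" using dZ_nonneg[OF gS gi, of "iota g i a0" "iota g i b"] by simp
          then show "b \<in> {a0}" using iso_zero[OF gS gi i a0(2) bZ] by simp
        qed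
        show "{a0} \<subseteq> P" using a0 by simp
      qed
      then show ?thesis unfolding P_def[symmetric] by auto
    next
      case False
      then have PS: "P \<subseteq> S1" using Zc_split[OF i] Pc by auto
      define C where "C = {c \<in> S1. dZ g (iota g 1 c) w = 0}"
      have CC: "compact C \<and> connected C" unfolding C_def by (rule C_compact_connected[OF gS gi Fm Fp geq w(1)])
      have "compact P \<and> connected P"
      proof (cases "i = 1")
        case True
        have "P = C" using PS Pc True S1_Zc[of 1] unfolding C_def by auto
        then show ?thesis using CC by simp
      next
        case False
        then have i2: "i = 2" using i by auto
        have "P = g ` C"
        proof
          show "P \<subseteq> g ` C"
          proof
            fix b assume b: "b \<in> P"
            then have bS: "b \<in> S1" using PS by auto
            then obtain c where c: "c \<in> S1" "b = g c" using gS by auto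
            have "dZ g (iota g 2 b) w = 0" using b Pc i2 by auto
            then have "dZ g (iota g 1 c) w = 0" using iota21[OF gS gi c(1)] c by simp
            then show "b \<in> g ` C" using c C_def by auto
          qed
          show "g ` C \<subseteq> P"
          proof
            fix b assume "b \<in> g ` C"
            then obtain c where c: "c \<in> S1" "dZ g (iota g 1 c) w = 0" "b = g c" using C_def by auto
            have "b \<in> Zc 2" using gS1[OF gS gi c(1)] c(3) S1_Zc[of 2] by auto
            moreover have "dZ g (iota g 2 b) w = 0" using iota21[OF gS gi c(1)] c by simp
            ultimately show "b \<in> P" using Pc i2 by simp
          qed
        qed
        moreover have "continuous_on C g" using gc by (rule continuous_on_subset) (auto simp: C_def)
        ultimately show ?thesis using CC compact_continuous_image connected_continuous_image by metis
      qed
      then show ?thesis using PS unfolding P_def[symmetric] by auto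
    qed
  qed
  show ?thesis using c1 c2 c3 by blast
qed


end
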